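(* Every vertex with in-degree at least $d^{4}$ gets removed or all but $d^4$ of its incoming edges get removed, with high probability (i.e., with probability at least $1-n^{-c}$ for any constant $c\geq 1$).
   Context: Setting: $G$ is a graph with $n$ nodes, arboricity $\lambda=o(n^c)$ for every constant $c>0$, and maximum degree $\Delta=\Omega\left(\left(\max\{\lambda, \log n\}\right)^{20}\right)$. Set $d=\Delta^{1/10}$, so that $d=\Omega(\lambda^2)$ and $d=\Omega(\log^{2} n)$. The following centralized algorithm (for maximal matching, resp. maximal independent set) is run. Partition phase: compute an $H$-partition with out-degree $d$ by greedy peeling: iteratively, for $i\geq 1$, put all remaining nodes with remaining degree at most $d$ into layer $L_i$ and remove them; this yields layers $L_1,\dots,L_\ell$ such that each vertex in $L_i$ has at most $d$ neighbors in $\bigcup_{j\ge i} L_j$. For neighbors $u\in L_i$, $v\in L_j$ with $i<j$, $v$ is a parent of $u$ and $u$ a child of $v$; edges are oriented from child to parent (outgoing from the child, incoming to the parent), and edges within the same layer are unoriented. The in-degree of a vertex is its number of children. Mark-and-propose phase: For matching, every node marks one of its outgoing edges chosen uniformly at random, and then every node proposes one of its incoming marked edges (if any) uniformly at random. For independent set, every node marks itself independently with probability $p=d^{-2}$, and a node is proposed if it is marked and none of its neighbors in the same layer is marked. Selection phase: iteratively, for $i=\ell,\dots,1$, all remaining proposed candidates in layer $i$ are added to the partial solution and removed from the graph. For matching: all remaining proposed edges directed to a node in layer $i$ are added to the matching and both their endpoints are removed. For independent set: all remaining proposed nodes in layer $i$ are added to the independent set and removed along with their neighbors. The lemma is stated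 (and proved) for both the matching and the independent set version of this algorithm; together with the out-degree bound $d$ it implies the remainder graph has maximum degree $O(d^4)$. *)

theory Defs
  imports "HOL-Probability.Probability" "HOL-Library.Landau_Symbols"
begin

text \<open>A graph with n nodes: vertices 0..n-1, edge set a symmetric irreflexive
  relation (each undirected edge {u,v} is stored as both (u,v) and (v,u)).\<close>

definition graph :: "nat \<Rightarrow> (nat \<times> nat) set \<Rightarrow> bool" where
  "graph n E \<longleftrightarrow> E \<subseteq> {..<n} \<times> {..<n} \<and> sym E \<and> (\<forall>v. (v, v) \<notin> E)"

definition nbrs :: "(nat \<times> nat) set \<Rightarrow> nat \<Rightarrow> nat set" where
  "nbrs E v = {u. (v, u) \<in> E}"

definition max_degree :: "nat \<Rightarrow> (nat \<times> nat) set \<Rightarrow> nat" where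
  "max_degree n E = Max ((\<lambda>v. card (nbrs E v)) ` {..<n})"

definition is_cycle :: "(nat \<times> nat) set \<Rightarrow> nat list \<Rightarrow> bool" where
  "is_cycle F xs \<longleftrightarrow> length xs \<ge> 3 \<and> distinct xs \<and>
     (\<forall>i < length xs. (xs ! i, xs ! ((i + 1) mod length xs)) \<in> F)"

definition forest :: "(nat \<times> nat) set \<Rightarrow> bool" where
  "forest F \<longleftrightarrow> sym F \<and> (\<forall>v. (v, v) \<notin> F) \<and> \<not> (\<exists>xs. is_cycle F xs)"

definition arboricity :: "(nat \<times> nat) set \<Rightarrow> nat" where
  "arboricity E = (LEAST k. \<exists>F :: nat \<Rightarrow> (nat \<times> nat) set.
       (\<forall>i<k. forest (F i)) \<and> (\<Union>i<k. F i) = E)"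

definition peel_step :: "(nat \<times> nat) set \<Rightarrow> real \<Rightarrow> nat set \<Rightarrow> nat set" where
  "peel_step E d R = {v \<in> R. real (card (nbrs E v \<inter> R)) \<le> d}"

primrec remaining :: "nat \<Rightarrow> (nat \<times> nat) set \<Rightarrow> real \<Rightarrow> nat \<Rightarrow> nat set" where
  "remaining n E d 0 = {..<n}"
| "remaining n E d (Suc i) = remaining n E d i - peel_step E d (remaining n E d i)"

text \<open>Layer L_(i+1) of the paper is layer_set n E d i (layers are 0-based here).\<close>

definition layer_set :: "nat \<Rightarrow> (nat \<times> nat) set \<Rightarrow> real \<Rightarrow> nat \<Rightarrow> nat set" where
  "layer_set n E d i = peel_step E d (remaining n E d i)"

definition layer :: "nat \<Rightarrow> (nat \<times> nat) set \<Rightarrow> real \<Rightarrow> nat \<Rightarrow> nat" where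
  "layer n E d v = (LEAST i. v \<in> layer_set n E d i)"

definition num_layers :: "nat \<Rightarrow> (nat \<times> nat) set \<Rightarrow> real \<Rightarrow> nat" where
  "num_layers n E d = (LEAST i. remaining n E d i = {})"

definition children :: "nat \<Rightarrow> (nat \<times> nat) set \<Rightarrow> real \<Rightarrow> nat \<Rightarrow> nat set" where
  "children n E d v = {u \<in> nbrs E v. layer n E d u < layer n E d v}"

definition parents :: "nat \<Rightarrow> (nat \<times> nat) set \<Rightarrow> real \<Rightarrow> nat \<Rightarrow> nat set" where
  "parents n E d u = {v \<in> nbrs E u. layer n E d u < layer n E d v}"

definition dpar :: "nat \<Rightarrow> (nat \<times> nat) set \<Rightarrow> real" where
  "dpar n E = real (max_degree n E) powr (1 / 10)"

text \<open>Every node marks one outgoing edge (i.e. one parent) uniformly at random;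
  mk u = Some v means u marked its edge to v.\<close>

definition mark_pmf :: "nat \<Rightarrow> (nat \<times> nat) set \<Rightarrow> real \<Rightarrow> (nat \<Rightarrow> nat option) pmf" where
  "mark_pmf n E d = Pi_pmf {..<n} None (\<lambda>u.
     if parents n E d u = {} then return_pmf None
     else map_pmf Some (pmf_of_set (parents n E d u)))"

text \<open>Every node proposes one of its incoming marked edges uniformly at random;
  pr v = Some u means v proposed the edge from u to v.\<close>

definition propose_pmf :: "nat \<Rightarrow> (nat \<times> nat) set \<Rightarrow> real \<Rightarrow> (nat \<Rightarrow> nat option)
    \<Rightarrow> (nat \<Rightarrow> nat option) pmf" where
  "propose_pmf n E d mk = Pi_pmf {..<n} None (\<lambda>v.
     let C = {u \<in> children n E d v. mk u = Some v} in
     if C = {} then return_pmf None else map_pmf Some (pmf_of_set C))"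

text \<open>Selection step for layer i: R is the set of removed vertices so far.\<close>

definition match_step :: "nat \<Rightarrow> (nat \<times> nat) set \<Rightarrow> real \<Rightarrow> (nat \<Rightarrow> nat option)
    \<Rightarrow> nat \<Rightarrow> nat set \<Rightarrow> nat set" where
  "match_step n E d pr i R = R \<union> {x. \<exists>v u. v < n \<and> layer n E d v = i \<and> pr v = Some u
      \<and> v \<notin> R \<and> u \<notin> R \<and> (x = u \<or> x = v)}"

definition match_removed :: "nat \<Rightarrow> (nat \<times> nat) set \<Rightarrow> real \<Rightarrow> (nat \<Rightarrow> nat option) \<Rightarrow> nat set" where
  "match_removed n E d pr = fold (match_step n E d pr) (rev [0..<num_layers n E d]) {}"

definition alg_match :: "nat \<Rightarrow> (nat \<times> nat) set \<Rightarrow> nat set pmf" where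
  "alg_match n E = (let d = dpar n E in
     mark_pmf n E d \<bind> (\<lambda>mk. propose_pmf n E d mk \<bind> (\<lambda>pr.
     return_pmf (match_removed n E d pr))))"

definition mis_mark_pmf :: "nat \<Rightarrow> real \<Rightarrow> (nat \<Rightarrow> bool) pmf" where
  "mis_mark_pmf n p = Pi_pmf {..<n} False (\<lambda>_. bernoulli_pmf p)"

definition mis_proposed :: "nat \<Rightarrow> (nat \<times> nat) set \<Rightarrow> real \<Rightarrow> (nat \<Rightarrow> bool) \<Rightarrow> nat \<Rightarrow> bool" where
  "mis_proposed n E d mk v \<longleftrightarrow> mk v \<and>
     (\<forall>u \<in> nbrs E v. layer n E d u = layer n E d v \<longrightarrow> \<not> mk u)"

definition mis_step :: "nat \<Rightarrow> (nat \<times> nat) set \<Rightarrow> real \<Rightarrow> (nat \<Rightarrow> bool)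
    \<Rightarrow> nat \<Rightarrow> nat set \<Rightarrow> nat set" where
  "mis_step n E d mk i R = (let S = {v. v < n \<and> layer n E d v = i \<and> mis_proposed n E d mk v \<and> v \<notin> R}
     in R \<union> S \<union> (\<Union>v\<in>S. nbrs E v))"

definition mis_removed :: "nat \<Rightarrow> (nat \<times> nat) set \<Rightarrow> real \<Rightarrow> (nat \<Rightarrow> bool) \<Rightarrow> nat set" where
  "mis_removed n E d mk = fold (mis_step n E d mk) (rev [0..<num_layers n E d]) {}"

definition alg_mis :: "nat \<Rightarrow> (nat \<times> nat) set \<Rightarrow> nat set pmf" where
  "alg_mis n E = (let d = dpar n E in
     map_pmf (mis_removed n E d) (mis_mark_pmf n (1 / d ^ 2)))"

text \<open>Every vertex with in-degree at least d^4 is removed, or all but at most d^4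
  of its incoming edges (edges from children) are removed, i.e. at most d^4 of
  its children survive. R is the set of removed vertices.\<close>

definition good_outcome :: "nat \<Rightarrow> (nat \<times> nat) set \<Rightarrow> nat set \<Rightarrow> bool" where
  "good_outcome n E R \<longleftrightarrow> (let d = dpar n E in
     \<forall>v < n. real (card (children n E d v)) \<ge> d ^ 4 \<longrightarrow>
        v \<in> R \<or> real (card {u \<in> children n E d v. u \<notin> R}) \<le> d ^ 4)"

end

theory Submission
  imports Defs
begin

definition fpath :: "(nat \<times> nat) set \<Rightarrow> nat list \<Rightarrow> bool" where
  "fpath F xs \<longleftrightarrow> xs \<noteq> [] \<and> distinct xs \<and> (\<forall>i. Suc i < length xs \<longrightarrow> (xs!i, xs!Suc i) \<in> F)"

lemma fpath_snoc:
  assumes "fpath F xs" "u \<notin> set xs" "(last xs, u) \<in> F"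
  shows "fpath F (xs @ [u])"
  unfolding fpath_def
proof (intro conjI allI impI)
  show "xs @ [u] \<noteq> []" by simp
  show "distinct (xs @ [u])" using assms unfolding fpath_def by simp
  fix i assume i: "Suc i < length (xs @ [u])"
  show "((xs @ [u]) ! i, (xs @ [u]) ! Suc i) \<in> F"
  proof (cases "Suc i < length xs")
    case True
    then show ?thesis using assms(1) unfolding fpath_def by (simp add: nth_append)
  next
    case False
    then have "Suc i = length xs" using i by simp
    then have "i = length xs - 1" by simp
    then show ?thesis using assms(1,3) unfolding fpath_def
      by (simp add: nth_append last_conv_nth)
  qed
qed

lemma forest_leaf:
  assumes F: "forest F" and fin: "finite R" and ne: "R \<noteq> {}"
  shows "\<exists>v\<in>R. card {u\<in>R. (v,u)\<in>F} \<le> 1"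
proof (rule ccontr)
  assume contra: "\<not> ?thesis"
  define P where "P = (\<lambda>xs. fpath F xs \<and> set xs \<subseteq> R)"
  obtain r where r: "r \<in> R" using ne by auto
  have P0: "P [r]" using r unfolding P_def fpath_def by simp
  have bnd: "\<forall>ys. P ys \<longrightarrow> length ys < card R + 1"
  proof (intro allI impI)
    fix ys assume "P ys"
    then have "distinct ys" "set ys \<subseteq> R" unfolding P_def fpath_def by auto
    then have "length ys \<le> card R" using fin by (metis card_mono distinct_card)
    then show "length ys < card R + 1" by simp
  qed
  obtain xs where Pxs: "P xs" and mx: "\<forall>ys. P ys \<longrightarrow> length ys \<le> length xs"
    using ex_has_greatest_nat[of P "[r]" length "card R + 1"] P0 bnd by blast
  have fp: "fpath F xs" and sx: "set xs \<subseteq> R" using Pxs unfolding P_def by auto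
  have xne: "xs \<noteq> []" and dx: "distinct xs" using fp unfolding fpath_def by auto
  define v where "v = last xs"
  have vR: "v \<in> R" using sx xne unfolding v_def by auto
  have irr: "\<forall>x. (x,x) \<notin> F" and sym: "sym F" using F unfolding forest_def by auto
  have nocyc: "\<not> is_cycle F ys" for ys using F unfolding forest_def by auto
  have "\<not> card {u\<in>R. (v,u)\<in>F} \<le> 1" using contra vR by auto
  then have "2 \<le> card {u\<in>R. (v,u)\<in>F}" by simp
  then obtain u1 u2 where u12: "u1 \<in> R" "(v,u1) \<in> F" "u2 \<in> R" "(v,u2) \<in> F" "u1 \<noteq> u2"
  proof -
    obtain A where "A \<subseteq> {u\<in>R. (v,u)\<in>F}" "card A = 2"
      using obtain_subset_with_card_n[OF \<open>2 \<le> card _\<close>] by metis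
    then show ?thesis using that by (auto simp: card_2_iff)
  qed
  define m where "m = length xs"
  have m1: "m \<ge> 1" using xne unfolding m_def by (cases xs) auto
  have vlast: "xs ! (m - 1) = v" unfolding v_def m_def using xne by (simp add: last_conv_nth)
  have ext: False if "u \<in> R" "(v,u) \<in> F" "u \<notin> set xs" for u
  proof -
    have "fpath F (xs @ [u])" using fpath_snoc[OF fp that(3)] that(2) unfolding v_def by simp
    then have "P (xs @ [u])" using sx that(1) unfolding P_def by auto
    then show False using mx by fastforce
  qed
  show False
  proof (cases "m = 1")
    case True
    have "u1 \<noteq> v" using u12(2) irr by auto
    then have "u1 \<notin> set xs" using True vlast xne unfolding m_def
      by (cases xs) auto
    then show False using ext u12 by blast
  next
    case False
    then have m2: "m \<ge> 2" using m1 by simp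
    define w where "w = xs ! (m - 2)"
    obtain u where u: "u \<in> R" "(v,u) \<in> F" "u \<noteq> w" using u12 by metis
    have "u \<in> set xs" using ext u by blast
    then obtain i where i: "i < m" "xs ! i = u" unfolding m_def by (auto simp: in_set_conv_nth)
    have "i \<noteq> m - 1" using i vlast u(2) irr by auto
    moreover have "i \<noteq> m - 2" using i u(3) unfolding w_def by auto
    ultimately have i3: "i + 3 \<le> m" using i(1) m2 by linarith
    define cyc where "cyc = drop i xs"
    have lc: "length cyc = m - i" unfolding cyc_def m_def by simp
    have cn: "cyc ! k = xs ! (i + k)" if "k < m - i" for k
      unfolding cyc_def using that unfolding m_def by simp
    have "is_cycle F cyc"
      unfolding is_cycle_def
    proof (intro conjI allI impI)
      show "3 \<le> length cyc" using lc i3 by simp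
      show "distinct cyc" using dx unfolding cyc_def by simp
      fix k assume k: "k < length cyc"
      show "(cyc ! k, cyc ! ((k + 1) mod length cyc)) \<in> F"
      proof (cases "k + 1 < length cyc")
        case True
        then have "(xs ! (i+k), xs ! Suc (i+k)) \<in> F" using fp lc unfolding fpath_def m_def by auto
        then show ?thesis using True lc cn by simp
      next
        case False
        then have kk: "k = m - i - 1" using k lc by simp
        then have "k + 1 = length cyc" using lc i3 by simp
        then have "(k + 1) mod length cyc = 0" by simp
        moreover have "cyc ! k = v" using cn[of k] kk i3 vlast by simp
        moreover have "cyc ! 0 = u" using cn[of 0] i3 i by simp
        ultimately show ?thesis using u(2) by simp
      qed
    qed
    then show False using nocyc by blast
  qed
qed

lemma forest_edges:
  assumes F: "forest F" and fin: "finite R"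
  shows "card (F \<inter> (R \<times> R)) \<le> 2 * (card R - 1)"
  using fin
proof (induct "card R" arbitrary: R rule: less_induct)
  case less
  show ?case
  proof (cases "R = {}")
    case True then show ?thesis by simp
  next
    case False
    obtain v where vR: "v \<in> R" and leaf: "card {u\<in>R. (v,u)\<in>F} \<le> 1"
      using forest_leaf[OF F less.prems False] by blast
    define R' where "R' = R - {v}"
    define Nv where "Nv = {u\<in>R. (v,u)\<in>F}"
    have irr: "\<forall>x. (x,x) \<notin> F" and sym: "sym F" using F unfolding forest_def by auto
    have finR': "finite R'" using less.prems unfolding R'_def by simp
    have cR': "card R' = card R - 1" unfolding R'_def using vR less.prems by simp
    have IH: "card (F \<inter> (R' \<times> R')) \<le> 2 * (card R' - 1)"
    proof -
      have "card R > 0" using vR less.prems card_gt_0_iff by blast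
      then show ?thesis using less.hyps[of R'] finR' cR' by simp
    qed
    have sub: "F \<inter> (R \<times> R) \<subseteq> (F \<inter> (R' \<times> R')) \<union> ({v} \<times> Nv) \<union> (Nv \<times> {v})"
      unfolding R'_def Nv_def using sym by (auto dest: symD)
    have finNv: "finite Nv" unfolding Nv_def using less.prems by simp
    have "card (F \<inter> (R \<times> R)) \<le> card ((F \<inter> (R' \<times> R')) \<union> ({v} \<times> Nv) \<union> (Nv \<times> {v}))"
      using sub finR' finNv by (intro card_mono) auto
    also have "\<dots> \<le> card (F \<inter> (R' \<times> R')) + card ({v} \<times> Nv) + card (Nv \<times> {v})"
      by (metis (no_types) card_Un_le add_le_mono order_trans le_refl)
    also have "\<dots> \<le> card (F \<inter> (R' \<times> R')) + 2"
      using leaf unfolding Nv_def[symmetric] by (simp add: card_cartesian_product)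
    finally have A: "card (F \<inter> (R \<times> R)) \<le> card (F \<inter> (R' \<times> R')) + 2" .
    show ?thesis
    proof (cases "R' = {}")
      case True
      then have "F \<inter> (R \<times> R) = {}" using irr vR unfolding R'_def by auto
      then show ?thesis by simp
    next
      case False
      then have "card R' \<ge> 1" using finR' by (simp add: Suc_leI card_gt_0_iff)
      then show ?thesis using A IH cR' by linarith
    qed
  qed
qed

lemma arboricity_witness:
  assumes "graph n E"
  shows "\<exists>F. (\<forall>i<arboricity E. forest (F i)) \<and> (\<Union>i<arboricity E. F i) = E"
proof -
  have finE: "finite E" using assms unfolding graph_def by (meson finite_SigmaI finite_lessThan finite_subset)
  obtain es where es: "set es = E" using finite_list[OF finE] by blast
  define F where "F = (\<lambda>i. {es ! i, prod.swap (es ! i)})"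
  have symE: "sym E" and irrE: "\<forall>v. (v,v) \<notin> E" using assms unfolding graph_def by auto
  have "forest (F i)" if i: "i < length es" for i
  proof -
    obtain a b where ab: "es ! i = (a,b)" by (cases "es ! i")
    have "(a,b) \<in> E" using ab i es nth_mem by metis
    then have aneb: "a \<noteq> b" using irrE by auto
    have Fi: "F i = {(a,b),(b,a)}" unfolding F_def ab by simp
    have "\<not> is_cycle (F i) xs" for xs
    proof
      assume c: "is_cycle (F i) xs"
      have "set xs \<subseteq> {a,b}"
      proof
        fix x assume "x \<in> set xs"
        then obtain k where k: "k < length xs" "xs ! k = x" by (auto simp: in_set_conv_nth)
        then have "(x, xs ! ((k+1) mod length xs)) \<in> F i" using c unfolding is_cycle_def by auto
        then show "x \<in> {a,b}" unfolding Fi by auto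
      qed
      then have "card (set xs) \<le> 2" by (metis card_2_iff card_mono finite.emptyI finite.insertI aneb)
      moreover have "card (set xs) = length xs" "length xs \<ge> 3" using c unfolding is_cycle_def by (auto simp: distinct_card)
      ultimately show False by simp
    qed
    then show ?thesis unfolding forest_def Fi using aneb by (auto simp: sym_def)
  qed
  moreover have "(\<Union>i<length es. F i) = E"
  proof
    show "(\<Union>i<length es. F i) \<subseteq> E" unfolding F_def using es symE
      by (auto simp: sym_def) (metis nth_mem prod.collapse swap_simp)
    show "E \<subseteq> (\<Union>i<length es. F i)" unfolding F_def using es by (force simp: in_set_conv_nth)
  qed
  ultimately have "(\<forall>i<length es. forest (F i)) \<and> (\<Union>i<length es. F i) = E"
    by blast
  then have "\<exists>(k::nat) F. (\<forall>i<k. forest (F i)) \<and> (\<Union>i<k. F i) = E" by blast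
  from LeastI_ex[OF this] show ?thesis unfolding arboricity_def .
qed

lemma degenerate:
  assumes G: "graph n E" and R: "finite R" "R \<noteq> {}"
  shows "\<exists>v\<in>R. card (nbrs E v \<inter> R) \<le> 2 * arboricity E"
proof (rule ccontr)
  assume contra: "\<not> ?thesis"
  define k where "k = arboricity E"
  obtain F where F: "\<forall>i<k. forest (F i)" "(\<Union>i<k. F i) = E"
    using arboricity_witness[OF G] unfolding k_def by blast
  have "E \<inter> (R \<times> R) = Sigma R (\<lambda>v. nbrs E v \<inter> R)" unfolding nbrs_def by auto
  then have "card (E \<inter> (R \<times> R)) = (\<Sum>v\<in>R. card (nbrs E v \<inter> R))"
    using R by (simp add: card_SigmaI)
  also have "\<dots> \<ge> (\<Sum>v\<in>R. 2*k + 1)"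
    using contra unfolding k_def by (intro sum_mono) (simp add: not_le Suc_le_eq)
  finally have lo: "card (E \<inter> (R \<times> R)) \<ge> card R * (2*k+1)" by simp
  have "E \<inter> (R \<times> R) = (\<Union>i<k. F i \<inter> (R \<times> R))" using F(2) by auto
  moreover have "card (\<Union>i<k. F i \<inter> (R \<times> R)) \<le> (\<Sum>i<k. card (F i \<inter> (R \<times> R)))"
    by (rule card_UN_le) simp
  ultimately have "card (E \<inter> (R \<times> R)) \<le> (\<Sum>i<k. card (F i \<inter> (R \<times> R)))"
    by simp
  also have "\<dots> \<le> (\<Sum>i<k. 2 * (card R - 1))"
    using F(1) R(1) by (intro sum_mono forest_edges) auto
  finally have "card R * (2*k+1) \<le> k * (2 * (card R - 1))" using lo by simp
  moreover have "card R \<ge> 1" using R by (simp add: Suc_leI card_gt_0_iff)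
  ultimately show False
    by (metis (no_types, lifting) add_le_same_cancel1 diff_le_self le_trans mult.commute mult_le_mono2 mult_Suc_right not_one_le_zero add.commute mult_2 distrib_left nat_mult_le_cancel_disj)
qed


lemma nat_step_exists:
  assumes "P (0::nat)" "\<not> P L"
  shows "\<exists>i<L. P i \<and> \<not> P (Suc i)"
  using assms
proof (induction L)
  case 0 then show ?case by simp
next
  case (Suc L)
  then show ?case by (cases "P L") (auto intro: less_SucI)
qed

locale setting =
  fixes n :: nat and E :: "(nat \<times> nat) set" and d :: real
  assumes G: "graph n E"
    and peel: "\<And>R. R \<subseteq> {..<n} \<Longrightarrow> R \<noteq> {} \<Longrightarrow> peel_step E d R \<noteq> {}"
begin

abbreviation "rem \<equiv> remaining n E d"
abbreviation "ls \<equiv> layer_set n E d"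
abbreviation "lay \<equiv> layer n E d"
abbreviation "L \<equiv> num_layers n E d"

lemma E_sub: "E \<subseteq> {..<n} \<times> {..<n}" using G unfolding graph_def by auto
lemma E_sym: "sym E" using G unfolding graph_def by auto
lemma E_irr: "(v,v) \<notin> E" using G unfolding graph_def by auto

lemma nbrs_sub: "nbrs E v \<subseteq> {..<n}" using E_sub unfolding nbrs_def by auto
lemma finite_nbrs[simp]: "finite (nbrs E v)" by (rule finite_subset[OF nbrs_sub]) simp
lemma nbrs_sym: "u \<in> nbrs E v \<longleftrightarrow> v \<in> nbrs E u" using E_sym unfolding nbrs_def by (auto dest: symD)
lemma nbrs_irr: "v \<notin> nbrs E v" using E_irr unfolding nbrs_def by auto

lemma peel_sub: "peel_step E d R \<subseteq> R" unfolding peel_step_def by auto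

lemma rem_Suc: "rem (Suc i) = rem i - ls i" by (simp add: layer_set_def)

lemma ls_sub: "ls i \<subseteq> rem i" unfolding layer_set_def by (rule peel_sub)

lemma rem_sub: "rem i \<subseteq> {..<n}"
  by (induction i) auto

lemma rem_mono: "i \<le> j \<Longrightarrow> rem j \<subseteq> rem i"
proof (induction j)
  case 0 then show ?case by simp
next
  case (Suc j) then show ?case by (cases "i = Suc j") (auto simp: le_Suc_eq)
qed

lemma finite_rem[simp]: "finite (rem i)" using rem_sub finite_subset by blast
lemma finite_ls[simp]: "finite (ls i)" using ls_sub finite_subset finite_rem by blast

lemma rem_card: "rem i \<noteq> {} \<Longrightarrow> card (rem i) + i \<le> n"
proof (induction i)
  case 0 then show ?case by simp
next
  case (Suc i)
  have ne: "rem i \<noteq> {}" using Suc.prems rem_mono[of i "Suc i"] by auto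
  have "ls i \<noteq> {}" using peel[OF rem_sub ne] unfolding layer_set_def by simp
  then have c0: "card (ls i) > 0" using finite_ls card_gt_0_iff by blast
  have c1: "card (rem i - ls i) = card (rem i) - card (ls i)"
    by (rule card_Diff_subset) (simp_all add: ls_sub)
  have c2: "card (ls i) \<le> card (rem i)" by (rule card_mono) (simp_all add: ls_sub)
  have "card (rem (Suc i)) < card (rem i)" unfolding rem_Suc c1 using c0 c2 by linarith
  then show ?case using Suc.IH[OF ne] by simp
qed

lemma rem_n: "rem n = {}"
proof (rule ccontr)
  assume "rem n \<noteq> {}"
  then have "card (rem n) = 0" using rem_card by fastforce
  then show False using \<open>rem n \<noteq> {}\<close> by simp
qed

lemma L_empty: "rem L = {}"
  unfolding num_layers_def using rem_n by (rule LeastI)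

lemma L_le: "L \<le> n"
  unfolding num_layers_def using rem_n by (rule Least_le)

lemma rem_ne: "i < L \<Longrightarrow> rem i \<noteq> {}"
  unfolding num_layers_def by (rule not_less_Least)

lemma ls_unique: "v \<in> ls i \<Longrightarrow> v \<in> ls j \<Longrightarrow> i = j"
proof (rule ccontr)
  assume a: "v \<in> ls i" "v \<in> ls j" "i \<noteq> j"
  have *: False if "v \<in> ls i" "v \<in> ls j" "i < j" for i j
  proof -
    have "v \<in> rem j" using that ls_sub by auto
    then have "v \<in> rem (Suc i)" using rem_mono[of "Suc i" j] that by auto
    then show False using that rem_Suc by auto
  qed
  show False using a *[of i j] *[of j i] by linarith
qed

lemma lay_eq: "v \<in> ls i \<Longrightarrow> lay v = i"
  unfolding layer_def using ls_unique by (intro Least_equality) auto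

lemma in_some_ls: "v < n \<Longrightarrow> \<exists>i<L. v \<in> ls i"
proof -
  assume "v < n"
  then have "v \<in> rem 0" "v \<notin> rem L" using L_empty by auto
  then obtain i where "i < L" "v \<in> rem i" "v \<notin> rem (Suc i)"
    using nat_step_exists[of "\<lambda>i. v \<in> rem i" L] by blast
  then show ?thesis using rem_Suc by auto
qed

lemma lay_ls: "v < n \<Longrightarrow> v \<in> ls (lay v)"
proof -
  assume "v < n"
  then obtain i where "i < L" "v \<in> ls i" using in_some_ls by blast
  then show ?thesis using lay_eq[of v i] by simp
qed

lemma lay_lt: "v < n \<Longrightarrow> lay v < L"
proof -
  assume "v < n"
  then obtain i where "i < L" "v \<in> ls i" using in_some_ls by blast
  then show ?thesis using lay_eq[of v i] by simp
qed

lemma in_rem_iff: "v < n \<Longrightarrow> v \<in> rem j \<longleftrightarrow> j \<le> lay v"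
proof
  assume v: "v < n" and "v \<in> rem j"
  show "j \<le> lay v"
  proof (rule ccontr)
    assume "\<not> j \<le> lay v"
    then have "rem j \<subseteq> rem (Suc (lay v))" using rem_mono[of "Suc (lay v)" j] by simp
    then show False using \<open>v \<in> rem j\<close> rem_Suc lay_ls[OF v] by auto
  qed
next
  assume v: "v < n" and "j \<le> lay v"
  then show "v \<in> rem j" using lay_ls[OF v] ls_sub[of "lay v"] rem_mono[of j "lay v"] by auto
qed

lemma ls_eq: "ls j = {v. v < n \<and> lay v = j}"
proof
  show "ls j \<subseteq> {v. v < n \<and> lay v = j}"
  proof
    fix v assume "v \<in> ls j"
    then show "v \<in> {v. v < n \<and> lay v = j}" using ls_sub[of j] rem_sub[of j] lay_eq[of v j] by auto
  qed
  show "{v. v < n \<and> lay v = j} \<subseteq> ls j"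
  proof
    fix v assume "v \<in> {v. v < n \<and> lay v = j}"
    then show "v \<in> ls j" using lay_ls[of v] by auto
  qed
qed

lemma deg_bound: "v < n \<Longrightarrow> real (card (nbrs E v \<inter> rem (lay v))) \<le> d"
  using lay_ls[of v] unfolding layer_set_def peel_step_def by auto

lemma parents_sub: "v < n \<Longrightarrow> parents n E d v \<subseteq> nbrs E v \<inter> rem (lay v)"
proof
  fix w assume "w \<in> parents n E d v"
  then have w: "w \<in> nbrs E v" "lay v < lay w" unfolding parents_def by auto
  then have "w < n" using nbrs_sub by auto
  then have "w \<in> rem (lay v)" using in_rem_iff[of w "lay v"] w(2) by simp
  then show "w \<in> nbrs E v \<inter> rem (lay v)" using w by simp
qed

lemma parents_bound: "v < n \<Longrightarrow> real (card (parents n E d v)) \<le> d"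
proof -
  assume v: "v < n"
  have "card (parents n E d v) \<le> card (nbrs E v \<inter> rem (lay v))"
    by (rule card_mono) (simp, rule parents_sub[OF v])
  then show ?thesis using deg_bound[OF v] by linarith
qed

lemma same_sub: "v < n \<Longrightarrow> nbrs E v \<inter> ls (lay v) \<subseteq> nbrs E v \<inter> rem (lay v)"
  using ls_sub by auto

lemma same_bound: "v < n \<Longrightarrow> real (card (nbrs E v \<inter> ls (lay v))) \<le> d"
proof -
  assume v: "v < n"
  have "card (nbrs E v \<inter> ls (lay v)) \<le> card (nbrs E v \<inter> rem (lay v))"
    by (rule card_mono) (simp, rule same_sub[OF v])
  then show ?thesis using deg_bound[OF v] by linarith
qed

lemma children_sub: "children n E d v \<subseteq> nbrs E v"
  unfolding children_def by auto

lemma finite_children[simp]: "finite (children n E d v)"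
  by (rule finite_subset[OF children_sub]) simp

lemma finite_parents[simp]: "finite (parents n E d v)"
  unfolding parents_def by auto

lemma children_parents: "u \<in> children n E d v \<longleftrightarrow> v \<in> parents n E d u"
  unfolding children_def parents_def using nbrs_sym[of u v] by blast

lemma children_lt: "u \<in> children n E d v \<Longrightarrow> u < n"
  using children_sub nbrs_sub by fastforce

end

lemma setting_intro:
  assumes G: "graph n E" and dd: "2 * real (arboricity E) \<le> d"
  shows "setting n E d"
proof
  show "graph n E" by fact
  fix R assume R: "R \<subseteq> {..<n}" "R \<noteq> {}"
  then have "finite R" using finite_subset by blast
  then obtain v where "v \<in> R" "card (nbrs E v \<inter> R) \<le> 2 * arboricity E"
    using degenerate[OF G \<open>finite R\<close> R(2)] by blast
  moreover have "real (card (nbrs E v \<inter> R)) \<le> d"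
  proof -
    have "real (card (nbrs E v \<inter> R)) \<le> real (2 * arboricity E)" using calculation(2) by linarith
    then show ?thesis using dd by simp
  qed
  ultimately have "v \<in> peel_step E d R" unfolding peel_step_def by (simp add: inf.commute)
  then show "peel_step E d R \<noteq> {}" by auto
qed


lemma bind_prob_ge:
  assumes "\<And>x. x \<in> set_pmf M \<Longrightarrow> x \<in> B \<Longrightarrow> set_pmf (f x) \<subseteq> A"
  shows "measure_pmf.prob (bind_pmf M f) A \<ge> measure_pmf.prob M B"
proof -
  have "emeasure (measure_pmf M) B = (\<integral>\<^sup>+x. indicator B x \<partial>M)" by simp
  also have "\<dots> \<le> (\<integral>\<^sup>+x. emeasure (f x) A \<partial>M)"
  proof (rule nn_integral_mono_AE)
    show "AE x in measure_pmf M. indicator B x \<le> emeasure (measure_pmf (f x)) A"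
    proof (rule AE_pmfI)
      fix x assume x: "x \<in> set_pmf M"
      show "indicator B x \<le> emeasure (measure_pmf (f x)) A"
      proof (cases "x \<in> B")
        case True
        have "emeasure (measure_pmf (f x)) (set_pmf (f x)) \<le> emeasure (measure_pmf (f x)) A"
          using assms[OF x True] by (intro emeasure_mono) auto
        then show ?thesis using True by (simp add: emeasure_pmf)
      qed simp
    qed
  qed
  also have "\<dots> = emeasure (bind_pmf M f) A" by simp
  finally show ?thesis by (simp add: measure_pmf.emeasure_eq_measure)
qed

definition goodd :: "nat \<Rightarrow> (nat \<times> nat) set \<Rightarrow> real \<Rightarrow> nat set \<Rightarrow> bool" where
  "goodd n E d R \<longleftrightarrow> (\<forall>v < n. real (card (children n E d v)) \<ge> d ^ 4 \<longrightarrow>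
        v \<in> R \<or> real (card {u \<in> children n E d v. u \<notin> R}) \<le> d ^ 4)"

lemma good_outcome_goodd: "good_outcome n E R = goodd n E (dpar n E) R"
  unfolding good_outcome_def goodd_def Let_def by simp

context setting
begin

definition mkp :: "nat \<Rightarrow> nat option pmf" where
  "mkp u = (if parents n E d u = {} then return_pmf None
     else map_pmf Some (pmf_of_set (parents n E d u)))"

lemma mark_eq: "mark_pmf n E d = Pi_pmf {..<n} None mkp"
  unfolding mark_pmf_def mkp_def ..

lemma set_mkp: "set_pmf (mkp u) = (if parents n E d u = {} then {None} else Some ` parents n E d u)"
  unfolding mkp_def by auto

lemma mk_support:
  assumes "mk \<in> set_pmf (mark_pmf n E d)" "mk u = Some w"
  shows "w \<in> parents n E d u"
proof -
  have "mk \<in> PiE_dflt {..<n} None (set_pmf \<circ> mkp)" using assms(1) unfolding mark_eq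
    by (simp add: set_Pi_pmf)
  then have h: "\<And>x. (x < n \<longrightarrow> mk x \<in> set_pmf (mkp x)) \<and> (\<not> x < n \<longrightarrow> mk x = None)"
    unfolding PiE_dflt_def by auto
  have "u < n"
  proof (rule ccontr)
    assume "\<not> u < n" then have "mk u = None" using h by blast
    then show False using assms(2) by simp
  qed
  then have m: "mk u \<in> set_pmf (mkp u)" using h by blast
  show ?thesis
  proof (cases "parents n E d u = {}")
    case True
    then show ?thesis using m assms(2) unfolding set_mkp by simp
  next
    case False
    then have "Some w \<in> Some ` parents n E d u" using m assms(2) unfolding set_mkp by simp
    then show ?thesis by auto
  qed
qed

definition Cset :: "(nat \<Rightarrow> nat option) \<Rightarrow> nat \<Rightarrow> nat set" where
  "Cset mk v = {u \<in> children n E d v. mk u = Some v}"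

definition prp :: "(nat \<Rightarrow> nat option) \<Rightarrow> nat \<Rightarrow> nat option pmf" where
  "prp mk v = (if Cset mk v = {} then return_pmf None else map_pmf Some (pmf_of_set (Cset mk v)))"

lemma propose_eq: "propose_pmf n E d mk = Pi_pmf {..<n} None (prp mk)"
  unfolding propose_pmf_def prp_def Cset_def Let_def ..

lemma finite_Cset[simp]: "finite (Cset mk v)"
  unfolding Cset_def by simp

lemma set_prp: "set_pmf (prp mk v) = (if Cset mk v = {} then {None} else Some ` Cset mk v)"
  unfolding prp_def by auto

lemma pr_support:
  assumes "pr \<in> set_pmf (propose_pmf n E d mk)"
  shows "pr v = Some u \<Longrightarrow> v < n \<and> u \<in> children n E d v \<and> mk u = Some v"
    and "v < n \<Longrightarrow> Cset mk v \<noteq> {} \<Longrightarrow> pr v \<noteq> None"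
proof -
  have *: "pr \<in> PiE_dflt {..<n} None (set_pmf \<circ> prp mk)" using assms unfolding propose_eq
    by (simp add: set_Pi_pmf)
  show "pr v = Some u \<Longrightarrow> v < n \<and> u \<in> children n E d v \<and> mk u = Some v"
  proof -
    assume a: "pr v = Some u"
    have "v < n"
    proof (rule ccontr)
      assume "\<not> v < n"
      then have "pr v = None" using * unfolding PiE_dflt_def by simp
      then show False using a by simp
    qed
    then have "pr v \<in> set_pmf (prp mk v)" using * unfolding PiE_dflt_def by auto
    then have "u \<in> Cset mk v" using a unfolding set_prp by (auto split: if_splits)
    then show ?thesis using \<open>v < n\<close> unfolding Cset_def by auto
  qed
  show "v < n \<Longrightarrow> Cset mk v \<noteq> {} \<Longrightarrow> pr v \<noteq> None"
  proof -
    assume "v < n" "Cset mk v \<noteq> {}"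
    moreover have "pr v \<in> set_pmf (prp mk v)" using * \<open>v < n\<close> unfolding PiE_dflt_def by auto
    ultimately have "pr v \<in> Some ` Cset mk v" unfolding set_prp by simp
    then show ?thesis by auto
  qed
qed

definition Mb :: "(nat \<Rightarrow> nat option) \<Rightarrow> nat \<Rightarrow> nat set" where
  "Mb pr j = fold (match_step n E d pr) (rev [j..<L]) {}"

lemma Mb_Suc: "j < L \<Longrightarrow> Mb pr j = match_step n E d pr j (Mb pr (Suc j))"
  unfolding Mb_def by (simp add: upt_conv_Cons)

lemma Mb_L: "L \<le> j \<Longrightarrow> Mb pr j = {}"
  unfolding Mb_def by simp

lemma match_removed_Mb: "match_removed n E d pr = Mb pr 0"
  unfolding match_removed_def Mb_def ..

lemma step_mono: "R \<subseteq> match_step n E d pr i R"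
  unfolding match_step_def by auto

lemma Mb_mono_Suc: "Mb pr (Suc j) \<subseteq> Mb pr j"
  by (cases "j < L") (simp_all add: Mb_Suc step_mono Mb_L)

lemma Mb_mono: "j \<le> k \<Longrightarrow> Mb pr k \<subseteq> Mb pr j"
proof (induction k)
  case 0 then show ?case by simp
next
  case (Suc k)
  then show ?case using Mb_mono_Suc[of pr k] by (cases "j = Suc k") (auto simp: le_Suc_eq)
qed

lemma proposed_removed:
  assumes mk: "mk \<in> set_pmf (mark_pmf n E d)" and pr: "pr \<in> set_pmf (propose_pmf n E d mk)"
    and pv: "pr v = Some u"
  shows "v \<in> match_removed n E d pr"
proof -
  have v: "v < n" and uc: "u \<in> children n E d v" and mku: "mk u = Some v"
    using pr_support(1)[OF pr pv] by auto
  have lu: "lay u < lay v" using uc unfolding children_def by auto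
  have notin: "u \<notin> Mb pr j" if "lay v < j" for j
    using that
  proof (induction "L - j" arbitrary: j)
    case 0 then show ?case by (simp add: Mb_L)
  next
    case (Suc k)
    then have jL: "j < L" by simp
    have IH: "u \<notin> Mb pr (Suc j)" using Suc by simp
    show ?case
    proof
      assume "u \<in> Mb pr j"
      then have "u \<in> match_step n E d pr j (Mb pr (Suc j))" using Mb_Suc[OF jL] by simp
      then obtain v' u' where w: "layer n E d v' = j" "pr v' = Some u'" "u = u' \<or> u = v'"
        using IH unfolding match_step_def by auto
      show False
      proof (cases "u = u'")
        case True
        then have "mk u = Some v'" using pr_support(1)[OF pr w(2)] by simp
        then have "v' = v" using mku by simp
        then show False using w(1) Suc.prems by simp
      next
        case False
        then have "u = v'" using w(3) by simp
        then show False using w(1) lu Suc.prems by simp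
      qed
    qed
  qed
  have lvL: "lay v < L" using lay_lt[OF v] .
  have "v \<in> Mb pr (lay v)"
  proof (cases "v \<in> Mb pr (Suc (lay v))")
    case True then show ?thesis using Mb_mono_Suc by blast
  next
    case False
    have "u \<notin> Mb pr (Suc (lay v))" using notin by simp
    then show ?thesis using False v pv unfolding Mb_Suc[OF lvL] match_step_def by blast
  qed
  then show ?thesis unfolding match_removed_Mb using Mb_mono[of 0 "lay v" pr] by auto
qed


lemma prob_nomark:
  assumes d1: "d \<ge> 1" and v: "v < n"
  shows "measure_pmf.prob (mark_pmf n E d) {mk. \<forall>u\<in>children n E d v. mk u \<noteq> Some v}
           \<le> exp (- real (card (children n E d v)) / d)"
proof -
  define ch where "ch = children n E d v"
  define B where "B = (\<lambda>u. if u \<in> ch then - {Some v} else (UNIV :: nat option set))"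
  have chn: "ch \<subseteq> {..<n}" unfolding ch_def using children_lt by auto
  have seq: "{mk. \<forall>u\<in>ch. mk u \<noteq> Some v} = Pi {..<n} B"
    unfolding B_def Pi_def using chn by auto
  have fac: "measure_pmf.prob (mkp u) (B u) \<le> (if u \<in> ch then 1 - 1 / d else 1)" for u
  proof (cases "u \<in> ch")
    case True
    define P where "P = parents n E d u"
    have vP: "v \<in> P" using True unfolding P_def ch_def children_parents .
    have u: "u < n" using True chn by auto
    have finP: "finite P" unfolding P_def by simp
    have cP1: "card P \<ge> 1" using vP finP by (metis One_nat_def Suc_leI card_gt_0_iff empty_iff)
    have cPd: "real (card P) \<le> d" unfolding P_def using parents_bound[OF u] .
    have "measure_pmf.prob (mkp u) (B u) = measure_pmf.prob (pmf_of_set P) (Some -` (- {Some v}))"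
      unfolding mkp_def B_def P_def[symmetric] using True vP by auto
    also have "Some -` (- {Some v}) = - {v}" by auto
    also have "measure_pmf.prob (pmf_of_set P) (- {v}) = real (card (P \<inter> - {v})) / real (card P)"
      using vP finP by (subst measure_pmf_of_set) auto
    also have "P \<inter> - {v} = P - {v}" by auto
    also have "card (P - {v}) = card P - 1" using vP finP by simp
    also have "real (card P - 1) / real (card P) = 1 - 1 / real (card P)"
      using cP1 by (simp add: field_simps of_nat_diff)
    also have "\<dots> \<le> 1 - 1 / d" using cP1 cPd by (simp add: frac_le)
    finally show ?thesis using True by simp
  next
    case False
    then show ?thesis unfolding B_def by simp
  qed
  have "measure_pmf.prob (mark_pmf n E d) {mk. \<forall>u\<in>ch. mk u \<noteq> Some v}
      = (\<Prod>u\<in>{..<n}. measure_pmf.prob (mkp u) (B u))"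
    unfolding seq mark_eq by (rule measure_Pi_pmf_Pi) simp
  also have "\<dots> \<le> (\<Prod>u\<in>{..<n}. (if u \<in> ch then 1 - 1 / d else 1))"
    by (rule prod_mono) (use fac in auto)
  also have "\<dots> = (1 - 1/d) ^ card ch"
    using chn by (simp add: prod.If_cases Int_absorb1)
  also have "\<dots> \<le> exp (- 1 / d) ^ card ch"
  proof (rule power_mono)
    show "1 - 1 / d \<le> exp (- 1 / d)" using exp_ge_add_one_self[of "- 1 / d"] by simp
    show "0 \<le> 1 - 1 / d" using d1 by simp
  qed
  also have "\<dots> = exp (- real (card ch) / d)"
    by (simp add: exp_of_nat_mult[symmetric])
  finally show ?thesis unfolding ch_def .
qed

lemma match_good:
  assumes d1: "d \<ge> 1"
  shows "measure_pmf.prob (bind_pmf (mark_pmf n E d) (\<lambda>mk. bind_pmf (propose_pmf n E d mk)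
            (\<lambda>pr. return_pmf (match_removed n E d pr)))) {R. goodd n E d R}
          \<ge> 1 - real n * exp (- (d ^ 3))"
proof -
  define Big where "Big = {v. v < n \<and> d ^ 4 \<le> real (card (children n E d v))}"
  define A where "A = (\<lambda>v. {mk. \<forall>u\<in>children n E d v. mk u \<noteq> Some v})"
  define Bad where "Bad = (\<Union>v\<in>Big. A v)"
  have finBig: "finite Big" unfolding Big_def by simp
  have cBig: "card Big \<le> n" unfolding Big_def
    by (metis (no_types, lifting) card_lessThan card_mono finite_lessThan lessThan_iff mem_Collect_eq subsetI)
  have step1: "measure_pmf.prob (bind_pmf (mark_pmf n E d) (\<lambda>mk. bind_pmf (propose_pmf n E d mk)
            (\<lambda>pr. return_pmf (match_removed n E d pr)))) {R. goodd n E d R}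
         \<ge> measure_pmf.prob (mark_pmf n E d) (- Bad)"
  proof (rule bind_prob_ge)
    fix mk assume mk: "mk \<in> set_pmf (mark_pmf n E d)" and nb: "mk \<in> - Bad"
    show "set_pmf (bind_pmf (propose_pmf n E d mk) (\<lambda>pr. return_pmf (match_removed n E d pr)))
          \<subseteq> {R. goodd n E d R}"
    proof
      fix R assume "R \<in> set_pmf (bind_pmf (propose_pmf n E d mk) (\<lambda>pr. return_pmf (match_removed n E d pr)))"
      then obtain pr where pr: "pr \<in> set_pmf (propose_pmf n E d mk)" and R: "R = match_removed n E d pr"
        by auto
      have "v \<in> R" if v: "v < n" "d ^ 4 \<le> real (card (children n E d v))" for v
      proof -
        have "v \<in> Big" using v unfolding Big_def by simp
        then have "mk \<notin> A v" using nb unfolding Bad_def by auto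
        then obtain u where "u \<in> children n E d v" "mk u = Some v" unfolding A_def by auto
        then have "Cset mk v \<noteq> {}" unfolding Cset_def by auto
        then obtain u' where "pr v = Some u'" using pr_support(2)[OF pr v(1)] by auto
        then show ?thesis using proposed_removed[OF mk pr] R by simp
      qed
      then show "R \<in> {R. goodd n E d R}" unfolding goodd_def by auto
    qed
  qed
  have "measure_pmf.prob (mark_pmf n E d) Bad \<le> (\<Sum>v\<in>Big. measure_pmf.prob (mark_pmf n E d) (A v))"
    unfolding Bad_def by (rule measure_pmf.finite_measure_subadditive_finite) (simp_all add: finBig)
  also have "\<dots> \<le> (\<Sum>v\<in>Big. exp (- (d ^ 3)))"
  proof (rule sum_mono)
    fix v assume v: "v \<in> Big"
    have "measure_pmf.prob (mark_pmf n E d) (A v) \<le> exp (- real (card (children n E d v)) / d)"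
      unfolding A_def using prob_nomark[OF d1] v unfolding Big_def by simp
    also have "\<dots> \<le> exp (- (d ^ 3))"
    proof -
      have "d ^ 4 \<le> real (card (children n E d v))" using v unfolding Big_def by simp
      moreover have "d ^ 4 = d ^ 3 * d" by (simp add: eval_nat_numeral)
      ultimately have "d ^ 3 * d \<le> real (card (children n E d v))" by simp
      then have "d ^ 3 \<le> real (card (children n E d v)) / d" using d1
        by (simp add: pos_le_divide_eq)
      then show ?thesis by simp
    qed
    finally show "measure_pmf.prob (mark_pmf n E d) (A v) \<le> exp (- (d ^ 3))" .
  qed
  also have "\<dots> = real (card Big) * exp (- (d ^ 3))" by simp
  also have "\<dots> \<le> real n * exp (- (d ^ 3))"
    using cBig by (intro mult_right_mono) simp_all
  finally have "measure_pmf.prob (mark_pmf n E d) Bad \<le> real n * exp (- (d ^ 3))" .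
  moreover have "measure_pmf.prob (mark_pmf n E d) (- Bad) = 1 - measure_pmf.prob (mark_pmf n E d) Bad"
    using measure_pmf.prob_compl[of Bad "mark_pmf n E d"] by (simp add: Compl_eq_Diff_UNIV)
  ultimately show ?thesis using step1 by linarith
qed

end

lemma greedy_indep:
  fixes N :: "nat \<Rightarrow> nat set" and D :: real
  assumes fin: "finite T" and ND: "\<And>u. u \<in> T \<Longrightarrow> real (card (N u \<inter> T)) \<le> D"
    and Nsym: "\<And>u w. u \<in> T \<Longrightarrow> w \<in> T \<Longrightarrow> w \<in> N u \<Longrightarrow> u \<in> N w"
    and Nirr: "\<And>u. u \<in> T \<Longrightarrow> u \<notin> N u"
  shows "\<exists>T'. T' \<subseteq> T \<and> (\<forall>u\<in>T'. N u \<inter> T' = {}) \<and> real (card T) \<le> (D + 1) * real (card T')"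
  using fin ND Nsym Nirr
proof (induction "card T" arbitrary: T rule: less_induct)
  case less
  show ?case
  proof (cases "T = {}")
    case True then show ?thesis by auto
  next
    case False
    then obtain u where u: "u \<in> T" by auto
    define T1 where "T1 = T - {u} - N u"
    have finT1: "finite T1" unfolding T1_def using less.prems(1) by simp
    have sub1: "T1 \<subseteq> T" unfolding T1_def by auto
    have "T1 \<subset> T" using u unfolding T1_def by auto
    then have lt: "card T1 < card T" using less.prems(1) by (simp add: psubset_card_mono)
    have ND1: "real (card (N w \<inter> T1)) \<le> D" if "w \<in> T1" for w
    proof -
      have "card (N w \<inter> T1) \<le> card (N w \<inter> T)" using sub1 less.prems(1) by (intro card_mono) auto
      then show ?thesis using less.prems(2)[of w] that sub1 by auto
    qed
    obtain T1' where T1': "T1' \<subseteq> T1" "\<forall>w\<in>T1'. N w \<inter> T1' = {}" "real (card T1) \<le> (D + 1) * real (card T1')"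
      using less.hyps[OF lt finT1 ND1] less.prems(3,4) sub1 by blast
    define T' where "T' = insert u T1'"
    have uT1': "u \<notin> T1'" using T1'(1) unfolding T1_def by auto
    have finT1': "finite T1'" using T1'(1) finT1 finite_subset by blast
    have cT': "card T' = card T1' + 1" unfolding T'_def using uT1' finT1' by simp
    have "T = insert u (T1 \<union> (N u \<inter> T))" unfolding T1_def using u by auto
    moreover have "card (insert u (T1 \<union> (N u \<inter> T))) \<le> Suc (card (T1 \<union> (N u \<inter> T)))"
      using less.prems(1) finT1 by (simp add: card_insert_if)
    ultimately have "card T \<le> Suc (card (T1 \<union> (N u \<inter> T)))" by simp
    moreover have "card (T1 \<union> (N u \<inter> T)) \<le> card T1 + card (N u \<inter> T)" by (rule card_Un_le)
    ultimately have "card T \<le> card T1 + card (N u \<inter> T) + 1" by simp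
    then have "real (card T) \<le> real (card T1) + D + 1"
      using less.prems(2)[OF u] by linarith
    also have "\<dots> \<le> (D + 1) * real (card T1') + D + 1" using T1'(3) by simp
    also have "\<dots> = (D + 1) * real (card T')" using cT' by (simp add: algebra_simps)
    finally have c: "real (card T) \<le> (D + 1) * real (card T')" .
    have indep: "\<forall>w\<in>T'. N w \<inter> T' = {}"
    proof
      fix w assume w: "w \<in> T'"
      show "N w \<inter> T' = {}"
      proof (rule ccontr)
        assume "N w \<inter> T' \<noteq> {}"
        then obtain x where x: "x \<in> N w" "x \<in> T'" by auto
        have wT: "w \<in> T" "x \<in> T" using w x T1'(1) sub1 u unfolding T'_def by auto
        show False
        proof (cases "w = u")
          case True
          then have "x \<noteq> u" using x(1) less.prems(4) wT by blast
          then have "x \<in> T1'" using x(2) unfolding T'_def by auto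
          then show False using x(1) True T1'(1) unfolding T1_def by auto
        next
          case False
          then have wT1: "w \<in> T1'" using w unfolding T'_def by auto
          show False
          proof (cases "x = u")
            case True
            then have "w \<in> N u" using less.prems(3)[OF wT(1) wT(2)] x(1) by simp
            then show False using wT1 T1'(1) unfolding T1_def by auto
          next
            case False
            then have "x \<in> T1'" using x(2) unfolding T'_def by auto
            then show False using T1'(2) wT1 x(1) by auto
          qed
        qed
      qed
    qed
    have "T' \<subseteq> T" using T1'(1) sub1 u unfolding T'_def by auto
    then show ?thesis using indep c by blast
  qed
qed


lemma nnb:
  fixes f :: "bool \<Rightarrow> real"
  assumes "0 \<le> p" "p \<le> 1" "\<And>b. f b \<ge> 0"
  shows "(\<integral>\<^sup>+b. ennreal (f b) \<partial>bernoulli_pmf p) = ennreal (f True * p + f False * (1 - p))"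
proof -
  have "(\<integral>\<^sup>+b. ennreal (f b) \<partial>bernoulli_pmf p) = ennreal (f True) * ennreal p + ennreal (f False) * ennreal (1 - p)"
    using assms by simp
  also have "\<dots> = ennreal (f True * p) + ennreal (f False * (1 - p))"
    using assms by (simp add: ennreal_mult)
  also have "\<dots> = ennreal (f True * p + f False * (1 - p))"
    using assms by (simp add: ennreal_plus)
  finally show ?thesis .
qed

lemma pointwise_bound:
  fixes T Ou :: "nat set" and N :: "nat \<Rightarrow> nat set" and g :: "nat \<Rightarrow> bool" and p :: real
  assumes finT: "finite T" and finO: "finite Ou" and NO: "\<And>u. u \<in> T \<Longrightarrow> N u \<subseteq> Ou"
    and p: "0 \<le> p" "p \<le> 1"
  shows "(\<Prod>u\<in>T. if (\<forall>x\<in>N u. \<not> g x) then 1 - p else 1)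
     \<le> exp (- p * real (card T)) * (\<Prod>x\<in>Ou. if g x then exp (p * real (card {u\<in>T. x \<in> N u})) else 1)"
proof -
  define Gs where "Gs = {u\<in>T. \<forall>x\<in>N u. \<not> g x}"
  define Bs where "Bs = {u\<in>T. \<not> (\<forall>x\<in>N u. \<not> g x)}"
  define S where "S = (\<Sum>x\<in>Ou. if g x then real (card {u\<in>T. x \<in> N u}) else 0)"
  have finGs: "finite Gs" unfolding Gs_def using finT by simp
  have TGB: "T = Gs \<union> Bs" unfolding Gs_def Bs_def by auto
  have dGB: "Gs \<inter> Bs = {}" unfolding Gs_def Bs_def by auto
  have finBs: "finite Bs" unfolding Bs_def using finT by simp
  have cT: "card T = card Gs + card Bs"
    using card_Un_disjoint[OF finGs finBs dGB] TGB by simp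
  have "(\<Prod>u\<in>T. if (\<forall>x\<in>N u. \<not> g x) then 1 - p else 1) = (1 - p) ^ card Gs"
  proof -
    have e: "T \<inter> {u. \<forall>x\<in>N u. \<not> g x} = Gs" unfolding Gs_def by auto
    show ?thesis using finT by (simp add: prod.If_cases e)
  qed
  also have "\<dots> \<le> exp (- p) ^ card Gs"
    using p by (intro power_mono) (use exp_ge_add_one_self[of "- p"] in auto)
  also have "\<dots> = exp (- p * real (card Gs))" by (simp add: exp_of_nat_mult[symmetric] mult.commute)
  finally have A: "(\<Prod>u\<in>T. if (\<forall>x\<in>N u. \<not> g x) then 1 - p else 1) \<le> exp (- p * real (card Gs))" .
  have Bsub: "Bs \<subseteq> (\<Union>x\<in>{x\<in>Ou. g x}. {u\<in>T. x \<in> N u})"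
    unfolding Bs_def using NO by blast
  have "card Bs \<le> card (\<Union>x\<in>{x\<in>Ou. g x}. {u\<in>T. x \<in> N u})"
    by (rule card_mono) (use finO finT Bsub in auto)
  also have "\<dots> \<le> (\<Sum>x\<in>{x\<in>Ou. g x}. card {u\<in>T. x \<in> N u})"
    by (rule card_UN_le) (use finO in simp)
  finally have "real (card Bs) \<le> real (\<Sum>x\<in>{x\<in>Ou. g x}. card {u\<in>T. x \<in> N u})"
    by (rule of_nat_mono)
  also have "\<dots> = (\<Sum>x\<in>{x\<in>Ou. g x}. real (card {u\<in>T. x \<in> N u}))" by simp
  also have "\<dots> = S" unfolding S_def using finO by (simp add: sum.inter_filter)
  finally have B: "real (card Bs) \<le> S" .
  have "p * real (card Bs) \<le> p * S" using B p by (intro mult_left_mono)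
  then have "- p * real (card Gs) \<le> - p * real (card T) + p * S"
    by (simp add: cT algebra_simps)
  then have "exp (- p * real (card Gs)) \<le> exp (- p * real (card T) + p * S)" by simp
  also have "\<dots> = exp (- p * real (card T)) * exp (p * S)" by (rule exp_add)
  also have "exp (p * S) = (\<Prod>x\<in>Ou. exp (p * (if g x then real (card {u\<in>T. x \<in> N u}) else 0)))"
    unfolding S_def sum_distrib_left using finO by (simp add: exp_sum)
  also have "\<dots> = (\<Prod>x\<in>Ou. if g x then exp (p * real (card {u\<in>T. x \<in> N u})) else 1)"
    by (intro prod.cong) auto
  finally show ?thesis using A by linarith
qed


lemma factor_bound:
  fixes p c :: real
  assumes "0 \<le> p" "p \<le> 1" "0 \<le> c" "p * c \<le> 1"
  shows "exp (p * c) * p + (1 - p) \<le> exp (2 * p\<^sup>2 * c)"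
proof -
  have "exp (p * c) \<le> 1 + p * c + (p * c)\<^sup>2" using assms by (intro exp_bound) (simp_all add: mult_nonneg_nonneg)
  also have "(p * c)\<^sup>2 \<le> p * c"
  proof -
    have "0 \<le> p * c" using assms by simp
    then have "(p * c) * (p * c) \<le> (p * c) * 1" using assms(4) by (intro mult_left_mono)
    then show ?thesis by (simp add: power2_eq_square)
  qed
  finally have "exp (p * c) \<le> 1 + 2 * (p * c)" by (simp add: mult.commute)
  then have "exp (p * c) * p \<le> (1 + 2 * (p * c)) * p" using assms by (intro mult_right_mono)
  then have "exp (p * c) * p + (1 - p) \<le> 1 + 2 * p\<^sup>2 * c" by (simp add: algebra_simps power2_eq_square)
  also have "\<dots> \<le> exp (2 * p\<^sup>2 * c)" using exp_ge_add_one_self[of "2 * p\<^sup>2 * c"] by simp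
  finally show ?thesis .
qed

lemma real_bound:
  fixes Ou :: "nat set" and c :: "nat \<Rightarrow> real" and p D t :: real
  assumes finOu: "finite Ou" and p: "0 \<le> p" "p \<le> 1" and c0: "\<And>x. x \<in> Ou \<Longrightarrow> 0 \<le> c x"
    and cD: "\<And>x. x \<in> Ou \<Longrightarrow> c x \<le> D" and pD: "p * D \<le> 1/4"
    and sumc: "(\<Sum>x\<in>Ou. c x) \<le> D * t" and t0: "0 \<le> t"
  shows "exp (- p * t) * (\<Prod>x\<in>Ou. exp (p * c x) * p + (1 - p)) \<le> exp (- p * t / 2)"
proof -
  have "(\<Prod>x\<in>Ou. exp (p * c x) * p + (1 - p)) \<le> (\<Prod>x\<in>Ou. exp (2 * p\<^sup>2 * c x))"
  proof (rule prod_mono)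
    fix x assume x: "x \<in> Ou"
    have "p * c x \<le> p * D" using cD[OF x] p by (intro mult_left_mono)
    then have "p * c x \<le> 1" using pD by simp
    then show "0 \<le> exp (p * c x) * p + (1 - p) \<and> exp (p * c x) * p + (1 - p) \<le> exp (2 * p\<^sup>2 * c x)"
      using factor_bound[OF p c0[OF x]] p by simp
  qed
  also have "\<dots> = exp (2 * p\<^sup>2 * (\<Sum>x\<in>Ou. c x))"
    using finOu by (simp add: exp_sum sum_distrib_left)
  also have "\<dots> \<le> exp (2 * p\<^sup>2 * (D * t))"
    using sumc by (simp add: mult_left_mono)
  finally have A: "(\<Prod>x\<in>Ou. exp (p * c x) * p + (1 - p)) \<le> exp (2 * p\<^sup>2 * (D * t))" .
  have "exp (- p * t) * (\<Prod>x\<in>Ou. exp (p * c x) * p + (1 - p)) \<le> exp (- p * t) * exp (2 * p\<^sup>2 * (D * t))"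
    using A by (intro mult_left_mono) simp_all
  also have "\<dots> = exp (- p * t + 2 * p\<^sup>2 * (D * t))" by (rule exp_add[symmetric])
  also have "\<dots> \<le> exp (- p * t / 2)"
  proof -
    have "2 * p\<^sup>2 * (D * t) = 2 * (p * D) * (p * t)" by (simp add: power2_eq_square algebra_simps)
    also have "\<dots> \<le> 2 * (1/4) * (p * t)" using pD p t0 by (intro mult_right_mono mult_left_mono) (simp_all add: mult_nonneg_nonneg)
    finally show ?thesis by simp
  qed
  finally show ?thesis .
qed


lemma card_filter_sum:
  "finite T \<Longrightarrow> card {u\<in>T. P u} = (\<Sum>u\<in>T. if P u then 1 else (0::nat))"
  using sum.inter_filter[of T "\<lambda>_. 1::nat" P] by simp

lemma sum_card_swap:
  fixes Ou T :: "nat set" and N :: "nat \<Rightarrow> nat set"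
  assumes "finite Ou" "finite T"
  shows "(\<Sum>x\<in>Ou. card {u\<in>T. x \<in> N u}) = (\<Sum>u\<in>T. card {x\<in>Ou. x \<in> N u})"
proof -
  have "(\<Sum>x\<in>Ou. card {u\<in>T. x \<in> N u}) = (\<Sum>x\<in>Ou. \<Sum>u\<in>T. if x \<in> N u then 1 else 0)"
    using assms by (intro sum.cong refl card_filter_sum)
  also have "\<dots> = (\<Sum>u\<in>T. \<Sum>x\<in>Ou. if x \<in> N u then 1 else 0)" by (rule sum.swap)
  also have "\<dots> = (\<Sum>u\<in>T. card {x\<in>Ou. x \<in> N u})"
  proof (intro sum.cong refl)
    fix u assume "u \<in> T"
    show "(\<Sum>x\<in>Ou. if x \<in> N u then 1 else 0) = card {x\<in>Ou. x \<in> N u}"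
      by (rule sym, rule card_filter_sum[OF assms(1)])
  qed
  finally show ?thesis .
qed


lemma indep_bound:
  fixes A T :: "nat set" and N :: "nat \<Rightarrow> nat set" and p D :: real
  assumes finA: "finite A" and TA: "T \<subseteq> A"
    and NA: "\<And>u. u \<in> A \<Longrightarrow> N u \<subseteq> A"
    and Nsym: "\<And>u w. u \<in> A \<Longrightarrow> w \<in> A \<Longrightarrow> w \<in> N u \<Longrightarrow> u \<in> N w"
    and ND: "\<And>u. u \<in> A \<Longrightarrow> real (card (N u)) \<le> D"
    and indep: "\<And>u. u \<in> T \<Longrightarrow> N u \<inter> T = {}"
    and p: "0 \<le> p" "p \<le> 1" and pD: "p * D \<le> 1/4"
  shows "emeasure (Pi_pmf A False (\<lambda>_. bernoulli_pmf p)) {a. \<forall>u\<in>T. \<not> (a u \<and> (\<forall>x\<in>N u. \<not> a x))}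
           \<le> ennreal (exp (- p * real (card T) / 2))"
proof -
  define Ou where "Ou = A - T"
  define Ev where "Ev = {a. \<forall>u\<in>T. \<not> (a u \<and> (\<forall>x\<in>N u. \<not> a x))}"
  define B where "B = (\<lambda>_::nat. bernoulli_pmf p)"
  define MO where "MO = Pi_pmf Ou False B"
  define MT where "MT = Pi_pmf T False B"
  define c where "c = (\<lambda>x. real (card {u\<in>T. x \<in> N u}))"
  define Q where "Q = (\<lambda>g::nat\<Rightarrow>bool. exp (- p * real (card T)) * (\<Prod>x\<in>Ou. if g x then exp (p * c x) else 1))"
  have finT: "finite T" using finA TA finite_subset by blast
  have finOu: "finite Ou" unfolding Ou_def using finA by simp
  have NO: "N u \<subseteq> Ou" if "u \<in> T" for u using NA[of u] TA that indep[OF that] unfolding Ou_def by auto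
  have AOT: "A = Ou \<union> T" unfolding Ou_def using TA by auto
  have split: "Pi_pmf A False B = map_pmf (\<lambda>(g,f) x. if x \<in> Ou then g x else f x) (pair_pmf MO MT)"
    unfolding AOT MO_def MT_def by (rule Pi_pmf_union) (use finOu finT in \<open>auto simp: Ou_def\<close>)
  have inner: "(\<integral>\<^sup>+f. indicator Ev (\<lambda>x. if x \<in> Ou then g x else f x) \<partial>MT) \<le> ennreal (Q g)" for g
  proof -
    define h where "h = (\<lambda>u b. if b \<and> (\<forall>x\<in>N u. \<not> g x) then 0 else (1::real))"
    have ind: "indicator Ev (\<lambda>x. if x \<in> Ou then g x else f x) = (\<Prod>u\<in>T. ennreal (h u (f u)))" for f
    proof (cases "\<exists>u\<in>T. f u \<and> (\<forall>x\<in>N u. \<not> g x)")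
      case True
      then obtain u where u: "u \<in> T" "f u" "\<forall>x\<in>N u. \<not> g x" by blast
      have uO: "u \<notin> Ou" using u(1) unfolding Ou_def by auto
      have "(\<lambda>x. if x \<in> Ou then g x else f x) \<notin> Ev" unfolding Ev_def using u uO NO[OF u(1)] by auto
      moreover have "(\<Prod>u\<in>T. ennreal (h u (f u))) = 0"
        using u finT by (intro prod_zero) (auto simp: h_def intro!: bexI[of _ u])
      ultimately show ?thesis by simp
    next
      case False
      have "(\<lambda>x. if x \<in> Ou then g x else f x) \<in> Ev"
      proof -
        have "\<not> (f u \<and> (\<forall>x\<in>N u. \<not> g x))" if "u \<in> T" for u using False that by blast
        moreover have "u \<notin> Ou" if "u \<in> T" for u using that unfolding Ou_def by auto
        ultimately show ?thesis unfolding Ev_def using NO by fastforce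
      qed
      moreover have "(\<Prod>u\<in>T. ennreal (h u (f u))) = 1"
        using False by (intro prod.neutral) (auto simp: h_def)
      ultimately show ?thesis by simp
    qed
    have "(\<integral>\<^sup>+f. indicator Ev (\<lambda>x. if x \<in> Ou then g x else f x) \<partial>MT)
        = (\<integral>\<^sup>+f. (\<Prod>u\<in>T. ennreal (h u (f u))) \<partial>MT)" by (simp add: ind)
    also have "\<dots> = (\<Prod>u\<in>T. \<integral>\<^sup>+b. ennreal (h u b) \<partial>B u)"
      unfolding MT_def by (rule nn_integral_prod_Pi_pmf[OF finT])
    also have "\<dots> = (\<Prod>u\<in>T. ennreal (if (\<forall>x\<in>N u. \<not> g x) then 1 - p else 1))"
    proof (intro prod.cong refl)
      fix u assume "u \<in> T"
      have "(\<integral>\<^sup>+b. ennreal (h u b) \<partial>B u) = ennreal (h u True * p + h u False * (1 - p))"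
        unfolding B_def by (rule nnb) (use p in \<open>auto simp: h_def\<close>)
      also have "h u True * p + h u False * (1 - p) = (if (\<forall>x\<in>N u. \<not> g x) then 1 - p else 1)"
        unfolding h_def by simp
      finally show "(\<integral>\<^sup>+b. ennreal (h u b) \<partial>B u) = ennreal (if (\<forall>x\<in>N u. \<not> g x) then 1 - p else 1)" .
    qed
    also have "\<dots> = ennreal (\<Prod>u\<in>T. if (\<forall>x\<in>N u. \<not> g x) then 1 - p else 1)"
      by (rule prod_ennreal) (use p in auto)
    also have "\<dots> \<le> ennreal (Q g)"
      unfolding Q_def c_def by (rule ennreal_leI, rule pointwise_bound[OF finT finOu NO p])
    finally show ?thesis .
  qed
  have "emeasure (Pi_pmf A False B) Ev = (\<integral>\<^sup>+a. indicator Ev a \<partial>Pi_pmf A False B)"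
    by simp
  also have "\<dots> = (\<integral>\<^sup>+g. \<integral>\<^sup>+f. indicator Ev (\<lambda>x. if x \<in> Ou then g x else f x) \<partial>MT \<partial>MO)"
    unfolding split by (simp add: nn_integral_pair_pmf' case_prod_unfold)
  also have "\<dots> \<le> (\<integral>\<^sup>+g. ennreal (Q g) \<partial>MO)"
    by (intro nn_integral_mono inner)
  also have "\<dots> = (\<integral>\<^sup>+g. ennreal (exp (- p * real (card T))) *
        (\<Prod>x\<in>Ou. ennreal (if g x then exp (p * c x) else 1)) \<partial>MO)"
    unfolding Q_def by (intro nn_integral_cong) (simp add: ennreal_mult prod_ennreal prod_nonneg)
  also have "\<dots> = ennreal (exp (- p * real (card T))) *
        (\<integral>\<^sup>+g. (\<Prod>x\<in>Ou. ennreal (if g x then exp (p * c x) else 1)) \<partial>MO)"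
    by (rule nn_integral_cmult) simp
  also have "(\<integral>\<^sup>+g. (\<Prod>x\<in>Ou. ennreal (if g x then exp (p * c x) else 1)) \<partial>MO)
      = (\<Prod>x\<in>Ou. \<integral>\<^sup>+b. ennreal (if b then exp (p * c x) else 1) \<partial>B x)"
    unfolding MO_def by (rule nn_integral_prod_Pi_pmf[OF finOu])
  also have "\<dots> = (\<Prod>x\<in>Ou. ennreal (exp (p * c x) * p + (1 - p)))"
  proof (intro prod.cong refl)
    fix x assume "x \<in> Ou"
    show "(\<integral>\<^sup>+b. ennreal (if b then exp (p * c x) else 1) \<partial>B x) = ennreal (exp (p * c x) * p + (1 - p))"
      unfolding B_def using nnb[of p "\<lambda>b. if b then exp (p * c x) else 1"] p by simp
  qed
  also have "\<dots> = ennreal (\<Prod>x\<in>Ou. exp (p * c x) * p + (1 - p))"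
    by (rule prod_ennreal) (use p in auto)
  also have "ennreal (exp (- p * real (card T))) * \<dots> = ennreal (exp (- p * real (card T)) * (\<Prod>x\<in>Ou. exp (p * c x) * p + (1 - p)))"
    by (rule ennreal_mult[symmetric]) (use p in \<open>auto intro!: prod_nonneg\<close>)
  also have "\<dots> \<le> ennreal (exp (- p * real (card T) / 2))"
  proof (rule ennreal_leI, rule real_bound[OF finOu p])
    show "0 \<le> c x" for x unfolding c_def by simp
    show "c x \<le> D" if x: "x \<in> Ou" for x
    proof -
      have xA: "x \<in> A" using x unfolding Ou_def by auto
      have "{u\<in>T. x \<in> N u} \<subseteq> N x" using Nsym xA TA by auto
      moreover have "finite (N x)" using NA[OF xA] finA finite_subset by blast
      ultimately have "card {u\<in>T. x \<in> N u} \<le> card (N x)" by (rule card_mono[rotated])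
      then show ?thesis unfolding c_def using ND[OF xA] by linarith
    qed
    show "p * D \<le> 1/4" by fact
    show "0 \<le> real (card T)" by simp
    show "(\<Sum>x\<in>Ou. c x) \<le> D * real (card T)"
    proof -
      have "(\<Sum>x\<in>Ou. c x) = real (\<Sum>u\<in>T. card {x\<in>Ou. x \<in> N u})"
        unfolding c_def of_nat_sum[symmetric] sum_card_swap[OF finOu finT] ..
      also have "\<dots> = (\<Sum>u\<in>T. real (card {x\<in>Ou. x \<in> N u}))" by simp
      also have "\<dots> \<le> (\<Sum>u\<in>T. D)"
      proof (rule sum_mono)
        fix u assume u: "u \<in> T"
        have uA: "u \<in> A" using u TA by auto
        have "finite (N u)" using NA[OF uA] finA finite_subset by blast
        then have "card {x\<in>Ou. x \<in> N u} \<le> card (N u)" by (rule card_mono) auto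
        then show "real (card {x\<in>Ou. x \<in> N u}) \<le> D" using ND[OF uA] by linarith
      qed
      also have "\<dots> = D * real (card T)" by simp
      finally show ?thesis .
    qed
  qed
  finally show ?thesis unfolding Ev_def B_def .
qed


lemma layer_bound:
  fixes A T :: "nat set" and N :: "nat \<Rightarrow> nat set" and p D :: real
  assumes finA: "finite A" and TA: "T \<subseteq> A"
    and NA: "\<And>u. u \<in> A \<Longrightarrow> N u \<subseteq> A"
    and Nsym: "\<And>u w. u \<in> A \<Longrightarrow> w \<in> A \<Longrightarrow> w \<in> N u \<Longrightarrow> u \<in> N w"
    and Nirr: "\<And>u. u \<in> A \<Longrightarrow> u \<notin> N u"
    and ND: "\<And>u. u \<in> A \<Longrightarrow> real (card (N u)) \<le> D"
    and p: "0 \<le> p" "p \<le> 1" and pD: "p * D \<le> 1/4" and D0: "0 \<le> D"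
  shows "emeasure (Pi_pmf A False (\<lambda>_. bernoulli_pmf p)) {a. \<forall>u\<in>T. \<not> (a u \<and> (\<forall>x\<in>N u. \<not> a x))}
           \<le> ennreal (exp (- (p / (2 * (D + 1))) * real (card T)))"
proof -
  have finT: "finite T" using finA TA finite_subset by blast
  have NDT: "real (card (N u \<inter> T)) \<le> D" if "u \<in> T" for u
  proof -
    have uA: "u \<in> A" using that TA by auto
    have "finite (N u)" using NA[OF uA] finA finite_subset by blast
    then have "card (N u \<inter> T) \<le> card (N u)" by (intro card_mono) auto
    then show ?thesis using ND[OF uA] by linarith
  qed
  obtain T' where T': "T' \<subseteq> T" "\<forall>u\<in>T'. N u \<inter> T' = {}" "real (card T) \<le> (D + 1) * real (card T')"
  proof -
    have s: "u \<in> N w" if "u \<in> T" "w \<in> T" "w \<in> N u" for u w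
      using Nsym[of u w] that TA by auto
    have i: "u \<notin> N u" if "u \<in> T" for u using Nirr[of u] that TA by auto
    show ?thesis using greedy_indep[OF finT NDT s i] that by metis
  qed
  have "emeasure (Pi_pmf A False (\<lambda>_. bernoulli_pmf p)) {a. \<forall>u\<in>T. \<not> (a u \<and> (\<forall>x\<in>N u. \<not> a x))}
      \<le> emeasure (Pi_pmf A False (\<lambda>_. bernoulli_pmf p)) {a. \<forall>u\<in>T'. \<not> (a u \<and> (\<forall>x\<in>N u. \<not> a x))}"
    using T'(1) by (intro emeasure_mono) auto
  also have "\<dots> \<le> ennreal (exp (- p * real (card T') / 2))"
  proof (rule indep_bound[OF finA _ NA Nsym ND _ p pD])
    show "T' \<subseteq> A" using T'(1) TA by auto
    show "N u \<inter> T' = {}" if "u \<in> T'" for u using T'(2) that by auto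
  qed
  also have "\<dots> \<le> ennreal (exp (- (p / (2 * (D + 1))) * real (card T)))"
  proof (rule ennreal_leI, subst exp_le_cancel_iff)
    have "real (card T) / (D + 1) \<le> real (card T')" using T'(3) D0 by (simp add: divide_le_eq mult.commute)
    then have "p * (real (card T) / (D + 1)) \<le> p * real (card T')" using p by (intro mult_left_mono)
    then have le: "p * (real (card T) / (D + 1)) / 2 \<le> p * real (card T') / 2" by (rule divide_right_mono) simp
    have "(p / (2 * (D + 1))) * real (card T) = p * (real (card T) / (D + 1)) / 2" by simp
    also have "\<dots> \<le> p * real (card T') / 2" by (rule le)
    finally have "(p / (2 * (D + 1))) * real (card T) \<le> p * real (card T') / 2" .
    then show "- p * real (card T') / 2 \<le> - (p / (2 * (D + 1))) * real (card T)" by simp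
  qed
  finally show ?thesis .
qed


context setting
begin

abbreviation "prop \<equiv> mis_proposed n E d"

definition Rb :: "(nat \<Rightarrow> bool) \<Rightarrow> nat \<Rightarrow> nat set" where
  "Rb mk j = fold (mis_step n E d mk) (rev [j..<L]) {}"

lemma Rb_Suc: "j < L \<Longrightarrow> Rb mk j = mis_step n E d mk j (Rb mk (Suc j))"
  unfolding Rb_def by (simp add: upt_conv_Cons)

lemma Rb_L: "L \<le> j \<Longrightarrow> Rb mk j = {}"
  unfolding Rb_def by simp

lemma mis_removed_Rb: "mis_removed n E d mk = Rb mk 0"
  unfolding mis_removed_def Rb_def ..

lemma mis_step_mono: "R \<subseteq> mis_step n E d mk i R"
  unfolding mis_step_def Let_def by auto

lemma Rb_mono_Suc: "Rb mk (Suc j) \<subseteq> Rb mk j"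
  by (cases "j < L") (simp_all add: Rb_Suc mis_step_mono Rb_L)

lemma Rb_mono: "j \<le> k \<Longrightarrow> Rb mk k \<subseteq> Rb mk j"
proof (induction k)
  case 0 then show ?case by simp
next
  case (Suc k)
  then show ?case using Rb_mono_Suc[of mk k] by (cases "j = Suc k") (auto simp: le_Suc_eq)
qed

lemma prop_local:
  assumes u: "u \<in> ls j" and agree: "\<And>x. x \<in> ls j \<Longrightarrow> mk x = a x"
  shows "prop mk u \<longleftrightarrow> a u \<and> (\<forall>x\<in>nbrs E u \<inter> ls j. \<not> a x)"
proof -
  have lu: "lay u = j" using u lay_eq by simp
  have "x \<in> ls j \<longleftrightarrow> lay x = j" if "x \<in> nbrs E u" for x
  proof -
    have "x < n" using that nbrs_sub by auto
    then show ?thesis using ls_eq by auto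
  qed
  then show ?thesis unfolding mis_proposed_def using agree u lu by auto
qed

lemma step_local:
  assumes agree: "\<And>x. x \<in> ls i \<Longrightarrow> mk x = mk' x"
  shows "mis_step n E d mk i R = mis_step n E d mk' i R"
proof -
  have "prop mk v = prop mk' v" if "v < n" "lay v = i" for v
  proof -
    have v: "v \<in> ls i" using that ls_eq by auto
    show ?thesis using prop_local[OF v agree] prop_local[OF v, of mk' mk'] by simp
  qed
  then have "{v. v < n \<and> lay v = i \<and> prop mk v \<and> v \<notin> R} = {v. v < n \<and> lay v = i \<and> prop mk' v \<and> v \<notin> R}"
    by blast
  then show ?thesis unfolding mis_step_def Let_def by simp
qed

lemma Rb_local:
  assumes "\<And>x. x \<in> rem j \<Longrightarrow> mk x = mk' x"
  shows "Rb mk j = Rb mk' j"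
  using assms
proof (induction "L - j" arbitrary: j)
  case 0 then show ?case by (simp add: Rb_L)
next
  case (Suc k)
  then have jL: "j < L" by simp
  have IH: "Rb mk (Suc j) = Rb mk' (Suc j)"
  proof (rule Suc.hyps(1))
    show "k = L - Suc j" using Suc.hyps(2) by simp
    show "mk x = mk' x" if "x \<in> rem (Suc j)" for x
      using Suc.prems[of x] that rem_mono[of j "Suc j"] by auto
  qed
  have "mis_step n E d mk j R = mis_step n E d mk' j R" for R
    by (rule step_local) (use Suc.prems ls_sub in blast)
  then show ?case using IH by (simp add: Rb_Suc[OF jL])
qed


definition Tset :: "nat \<Rightarrow> nat \<Rightarrow> (nat \<Rightarrow> bool) \<Rightarrow> nat set" where
  "Tset v l mk = {u \<in> children n E d v. lay u = l \<and> u \<notin> Rb mk (Suc l)}"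

definition phi :: "real \<Rightarrow> nat \<Rightarrow> nat \<Rightarrow> (nat \<Rightarrow> bool) \<Rightarrow> ennreal" where
  "phi \<beta> v l mk = (if \<forall>u\<in>Tset v l mk. \<not> prop mk u then ennreal (exp (\<beta> * real (card (Tset v l mk)))) else 0)"

definition Phi :: "real \<Rightarrow> nat \<Rightarrow> nat \<Rightarrow> (nat \<Rightarrow> bool) \<Rightarrow> ennreal" where
  "Phi \<beta> v j mk = (\<Prod>l\<in>{j..<L}. phi \<beta> v l mk)"

lemma Tset_sub: "Tset v l mk \<subseteq> ls l"
proof
  fix u assume "u \<in> Tset v l mk"
  then have "u \<in> children n E d v" "lay u = l" unfolding Tset_def by auto
  then show "u \<in> ls l" using children_lt ls_eq by auto
qed

lemma finite_Tset[simp]: "finite (Tset v l mk)"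
  unfolding Tset_def by simp

lemma phi_local:
  assumes "\<And>x. x \<in> rem l \<Longrightarrow> mk x = mk' x"
  shows "phi \<beta> v l mk = phi \<beta> v l mk'"
proof -
  have "Rb mk (Suc l) = Rb mk' (Suc l)"
    by (rule Rb_local) (use assms rem_mono[of l "Suc l"] in auto)
  then have T: "Tset v l mk = Tset v l mk'" unfolding Tset_def by simp
  have "prop mk u = prop mk' u" if "u \<in> Tset v l mk" for u
  proof -
    have u: "u \<in> ls l" using that Tset_sub by auto
    have ag: "mk x = mk' x" if "x \<in> ls l" for x using assms that ls_sub by auto
    show ?thesis using prop_local[OF u ag] prop_local[OF u, of mk' mk'] by simp
  qed
  then show ?thesis unfolding phi_def T by simp
qed

lemma Phi_local:
  assumes "\<And>x. x \<in> rem j \<Longrightarrow> mk x = mk' x"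
  shows "Phi \<beta> v j mk = Phi \<beta> v j mk'"
  unfolding Phi_def
proof (rule prod.cong[OF refl])
  fix l assume "l \<in> {j..<L}"
  then have "rem l \<subseteq> rem j" using rem_mono by simp
  then show "phi \<beta> v l mk = phi \<beta> v l mk'" using assms by (intro phi_local) auto
qed


lemma phi_layer_bound:
  assumes d4: "d \<ge> 4" and T: "T \<subseteq> ls j"
  shows "(\<integral>\<^sup>+a. (if \<forall>u\<in>T. \<not> (a u \<and> (\<forall>x\<in>nbrs E u \<inter> ls j. \<not> a x))
              then ennreal (exp (1 / d\<^sup>2 / (2 * (d + 1)) * real (card T))) else 0)
          \<partial>Pi_pmf (ls j) False (\<lambda>_. bernoulli_pmf (1 / d\<^sup>2))) \<le> 1"
proof -
  define p where "p = 1 / d\<^sup>2"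
  define \<beta> where "\<beta> = p / (2 * (d + 1))"
  define Ev where "Ev = {a. \<forall>u\<in>T. \<not> (a u \<and> (\<forall>x\<in>nbrs E u \<inter> ls j. \<not> a x))}"
  define P where "P = Pi_pmf (ls j) False (\<lambda>_. bernoulli_pmf p)"
  have dpos: "d > 0" using d4 by simp
  have p0: "0 \<le> p" unfolding p_def by simp
  have p1: "p \<le> 1"
  proof -
    have "1 \<le> d * d" using d4 mult_mono[of 1 d 1 d] by simp
    then show ?thesis unfolding p_def by (simp add: power2_eq_square)
  qed
  have pD: "p * d \<le> 1/4" unfolding p_def using d4 by (simp add: power2_eq_square field_simps)
  have lb: "emeasure P Ev \<le> ennreal (exp (- \<beta> * real (card T)))"
    unfolding P_def Ev_def \<beta>_def
  proof (rule layer_bound[OF finite_ls T _ _ _ _ p0 p1 pD])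
    show "nbrs E u \<inter> ls j \<subseteq> ls j" for u by auto
    show "u \<in> nbrs E w \<inter> ls j" if "u \<in> ls j" "w \<in> ls j" "w \<in> nbrs E u \<inter> ls j" for u w
      using that nbrs_sym by auto
    show "u \<notin> nbrs E u \<inter> ls j" for u using nbrs_irr by auto
    show "real (card (nbrs E u \<inter> ls j)) \<le> d" if "u \<in> ls j" for u
    proof -
      have "u < n" "lay u = j" using that ls_eq by auto
      then show ?thesis using same_bound[of u] by simp
    qed
    show "0 \<le> d" using d4 by simp
  qed
  have "(\<integral>\<^sup>+a. (if a \<in> Ev then ennreal (exp (\<beta> * real (card T))) else 0) \<partial>P)
      = (\<integral>\<^sup>+a. ennreal (exp (\<beta> * real (card T))) * indicator Ev a \<partial>P)"
    by (intro nn_integral_cong) (simp add: indicator_def)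
  also have "\<dots> = ennreal (exp (\<beta> * real (card T))) * emeasure P Ev"
    by (rule nn_integral_cmult_indicator) simp
  also have "\<dots> \<le> ennreal (exp (\<beta> * real (card T))) * ennreal (exp (- \<beta> * real (card T)))"
    by (rule mult_left_mono[OF lb]) simp
  also have "\<dots> = ennreal (exp (\<beta> * real (card T)) * exp (- \<beta> * real (card T)))"
    by (rule ennreal_mult[symmetric]) simp_all
  also have "exp (\<beta> * real (card T)) * exp (- \<beta> * real (card T)) = 1"
    by (simp add: exp_minus[symmetric] exp_add[symmetric])
  finally show ?thesis unfolding Ev_def P_def \<beta>_def p_def by (simp add: mem_Collect_eq)
qed


lemma Phi_bound:
  assumes d4: "d \<ge> 4"
  shows "j \<le> L \<Longrightarrow> (\<integral>\<^sup>+mk. Phi (1 / d\<^sup>2 / (2 * (d + 1))) v j mk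
            \<partial>Pi_pmf (rem j) False (\<lambda>_. bernoulli_pmf (1 / d\<^sup>2))) \<le> 1"
proof (induction "L - j" arbitrary: j)
  case 0
  then have "j = L" by simp
  then show ?case using L_empty by (simp add: Phi_def)
next
  case (Suc k)
  define \<beta> where "\<beta> = 1 / d\<^sup>2 / (2 * (d + 1))"
  define Bm where "Bm = (\<lambda>_::nat. bernoulli_pmf (1 / d\<^sup>2))"
  define Pa where "Pa = Pi_pmf (ls j) False Bm"
  define Pb where "Pb = Pi_pmf (rem (Suc j)) False Bm"
  define mg where "mg = (\<lambda>(b::nat\<Rightarrow>bool) (a::nat\<Rightarrow>bool) x. if x \<in> rem (Suc j) then b x else a x)"
  have jL: "j < L" using Suc.hyps(2) by simp
  have IH: "(\<integral>\<^sup>+mk. Phi \<beta> v (Suc j) mk \<partial>Pb) \<le> 1"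
    unfolding \<beta>_def Pb_def Bm_def using Suc.hyps(1)[of "Suc j"] Suc.hyps(2) jL by simp
  have remj: "rem j = rem (Suc j) \<union> ls j" using rem_Suc[of j] ls_sub[of j] by auto
  have disj: "rem (Suc j) \<inter> ls j = {}" by (auto simp: layer_set_def)
  have split: "Pi_pmf (rem j) False Bm = map_pmf (\<lambda>(b,a). mg b a) (pair_pmf Pb Pa)"
    unfolding remj Pb_def Pa_def mg_def by (rule Pi_pmf_union[OF finite_rem finite_ls disj])
  define T where "T = (\<lambda>b. Tset v j b)"
  have inner: "(\<integral>\<^sup>+a. Phi \<beta> v j (mg b a) \<partial>Pa) \<le> Phi \<beta> v (Suc j) b" for b
  proof -
    have agreeS: "mg b a x = b x" if "x \<in> rem (Suc j)" for a x using that unfolding mg_def by simp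
    have agreeL: "mg b a x = a x" if "x \<in> ls j" for a x using that disj unfolding mg_def by auto
    have Tb: "Tset v j (mg b a) = T b" for a
    proof -
      have "Rb (mg b a) (Suc j) = Rb b (Suc j)" by (rule Rb_local) (rule agreeS)
      then show ?thesis unfolding Tset_def T_def by simp
    qed
    have TL: "T b \<subseteq> ls j" unfolding T_def by (rule Tset_sub)
    have phij: "phi \<beta> v j (mg b a) = (if \<forall>u\<in>T b. \<not> (a u \<and> (\<forall>x\<in>nbrs E u \<inter> ls j. \<not> a x))
              then ennreal (exp (\<beta> * real (card (T b)))) else 0)" for a
    proof -
      have "prop (mg b a) u \<longleftrightarrow> a u \<and> (\<forall>x\<in>nbrs E u \<inter> ls j. \<not> a x)" if "u \<in> T b" for u
        using prop_local[of u j "mg b a" a] that TL agreeL by auto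
      then show ?thesis unfolding phi_def Tb by simp
    qed
    have PhiS: "Phi \<beta> v (Suc j) (mg b a) = Phi \<beta> v (Suc j) b" for a
      by (rule Phi_local) (rule agreeS)
    have PhiSplit: "Phi \<beta> v j m = phi \<beta> v j m * Phi \<beta> v (Suc j) m" for m
    proof -
      have "{j..<L} = insert j {Suc j..<L}" using jL by auto
      then show ?thesis unfolding Phi_def by simp
    qed
    have "(\<integral>\<^sup>+a. Phi \<beta> v j (mg b a) \<partial>Pa)
        = (\<integral>\<^sup>+a. (if \<forall>u\<in>T b. \<not> (a u \<and> (\<forall>x\<in>nbrs E u \<inter> ls j. \<not> a x))
              then ennreal (exp (\<beta> * real (card (T b)))) else 0) * Phi \<beta> v (Suc j) b \<partial>Pa)"
      by (intro nn_integral_cong) (simp only: PhiSplit phij PhiS)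
    also have "\<dots> = (\<integral>\<^sup>+a. (if \<forall>u\<in>T b. \<not> (a u \<and> (\<forall>x\<in>nbrs E u \<inter> ls j. \<not> a x))
              then ennreal (exp (\<beta> * real (card (T b)))) else 0) \<partial>Pa) * Phi \<beta> v (Suc j) b"
      by (rule nn_integral_multc) simp
    also have "\<dots> \<le> 1 * Phi \<beta> v (Suc j) b"
      unfolding Pa_def Bm_def \<beta>_def by (intro mult_right_mono phi_layer_bound[OF d4 TL]) simp
    finally show ?thesis by simp
  qed
  have "(\<integral>\<^sup>+mk. Phi \<beta> v j mk \<partial>Pi_pmf (rem j) False Bm)
      = (\<integral>\<^sup>+b. \<integral>\<^sup>+a. Phi \<beta> v j (mg b a) \<partial>Pa \<partial>Pb)"
    unfolding split by (simp add: nn_integral_pair_pmf' case_prod_unfold)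
  also have "\<dots> \<le> (\<integral>\<^sup>+b. Phi \<beta> v (Suc j) b \<partial>Pb)"
    by (intro nn_integral_mono inner)
  also have "\<dots> \<le> 1" by (rule IH)
  finally show ?case unfolding \<beta>_def Bm_def .
qed


lemma no_prop:
  assumes v: "v < n" and nv: "v \<notin> Rb mk 0" and u: "u \<in> Tset v l mk"
  shows "\<not> prop mk u"
proof
  assume pu: "prop mk u"
  have uc: "u \<in> children n E d v" and lu: "lay u = l" and nR: "u \<notin> Rb mk (Suc l)"
    using u unfolding Tset_def by auto
  have un: "u < n" using children_lt[OF uc] .
  have lL: "l < L" using lay_lt[OF un] lu by simp
  have vu: "v \<in> nbrs E u" using uc children_sub nbrs_sym by blast
  have "v \<in> Rb mk l"
    unfolding Rb_Suc[OF lL] mis_step_def Let_def using un lu pu nR vu by blast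
  then show False using nv Rb_mono[of 0 l mk] by auto
qed

lemma survivors_sub:
  "{u \<in> children n E d v. u \<notin> Rb mk 0} \<subseteq> (\<Union>l\<in>{0..<L}. Tset v l mk)"
proof
  fix u assume u: "u \<in> {u \<in> children n E d v. u \<notin> Rb mk 0}"
  then have uc: "u \<in> children n E d v" and nR: "u \<notin> Rb mk 0" by auto
  have un: "u < n" using children_lt[OF uc] .
  have "u \<notin> Rb mk (Suc (lay u))" using nR Rb_mono[of 0 "Suc (lay u)" mk] by auto
  then have "u \<in> Tset v (lay u) mk" unfolding Tset_def using uc by simp
  moreover have "lay u \<in> {0..<L}" using lay_lt[OF un] by simp
  ultimately show "u \<in> (\<Union>l\<in>{0..<L}. Tset v l mk)" by blast
qed

lemma mis_fail_bound:
  assumes d4: "d \<ge> 4" and v: "v < n"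
  shows "measure_pmf.prob (mis_mark_pmf n (1 / d\<^sup>2))
           {mk. v \<notin> mis_removed n E d mk \<and> d ^ 4 < real (card {u \<in> children n E d v. u \<notin> mis_removed n E d mk})}
         \<le> exp (- d / 4)"
proof -
  define \<beta> where "\<beta> = 1 / d\<^sup>2 / (2 * (d + 1))"
  define Fail where "Fail = {mk. v \<notin> mis_removed n E d mk \<and> d ^ 4 < real (card {u \<in> children n E d v. u \<notin> mis_removed n E d mk})}"
  define M where "M = mis_mark_pmf n (1 / d\<^sup>2)"
  have dpos: "d > 0" using d4 by simp
  have b0: "\<beta> \<ge> 0" unfolding \<beta>_def using dpos by simp
  have M_eq: "M = Pi_pmf (rem 0) False (\<lambda>_. bernoulli_pmf (1 / d\<^sup>2))"
    unfolding M_def mis_mark_pmf_def by simp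
  have pw: "indicator Fail mk * ennreal (exp (\<beta> * d ^ 4)) \<le> Phi \<beta> v 0 mk" for mk
  proof (cases "mk \<in> Fail")
    case False then show ?thesis by simp
  next
    case True
    then have nv: "v \<notin> Rb mk 0" and big: "d ^ 4 < real (card {u \<in> children n E d v. u \<notin> Rb mk 0})"
      unfolding Fail_def mis_removed_Rb by auto
    have allp: "\<forall>u\<in>Tset v l mk. \<not> prop mk u" for l using no_prop[OF v nv] by blast
    have "Phi \<beta> v 0 mk = (\<Prod>l\<in>{0..<L}. ennreal (exp (\<beta> * real (card (Tset v l mk)))))"
      unfolding Phi_def phi_def using allp by simp
    also have "\<dots> = ennreal (\<Prod>l\<in>{0..<L}. exp (\<beta> * real (card (Tset v l mk))))"
      by (rule prod_ennreal) simp
    also have "(\<Prod>l\<in>{0..<L}. exp (\<beta> * real (card (Tset v l mk)))) = exp (\<beta> * (\<Sum>l\<in>{0..<L}. real (card (Tset v l mk))))"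
      by (simp add: exp_sum sum_distrib_left)
    finally have P: "Phi \<beta> v 0 mk = ennreal (exp (\<beta> * (\<Sum>l\<in>{0..<L}. real (card (Tset v l mk)))))" .
    have "card {u \<in> children n E d v. u \<notin> Rb mk 0} \<le> card (\<Union>l\<in>{0..<L}. Tset v l mk)"
      by (rule card_mono[OF _ survivors_sub]) simp
    also have "\<dots> \<le> (\<Sum>l\<in>{0..<L}. card (Tset v l mk))" by (rule card_UN_le) simp
    finally have "real (card {u \<in> children n E d v. u \<notin> Rb mk 0}) \<le> real (\<Sum>l\<in>{0..<L}. card (Tset v l mk))"
      by (rule of_nat_mono)
    then have "d ^ 4 \<le> (\<Sum>l\<in>{0..<L}. real (card (Tset v l mk)))" using big by simp
    then have "\<beta> * d ^ 4 \<le> \<beta> * (\<Sum>l\<in>{0..<L}. real (card (Tset v l mk)))" using b0 by (rule mult_left_mono)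
    then have "ennreal (exp (\<beta> * d ^ 4)) \<le> Phi \<beta> v 0 mk" unfolding P by (intro ennreal_leI) simp
    then show ?thesis using True by simp
  qed
  have "emeasure M Fail * ennreal (exp (\<beta> * d ^ 4)) = (\<integral>\<^sup>+mk. indicator Fail mk * ennreal (exp (\<beta> * d ^ 4)) \<partial>M)"
  proof -
    have "(\<integral>\<^sup>+mk. indicator Fail mk * ennreal (exp (\<beta> * d ^ 4)) \<partial>M)
        = (\<integral>\<^sup>+mk. indicator Fail mk \<partial>M) * ennreal (exp (\<beta> * d ^ 4))"
      by (rule nn_integral_multc) simp
    then show ?thesis by simp
  qed
  also have "\<dots> \<le> (\<integral>\<^sup>+mk. Phi \<beta> v 0 mk \<partial>M)" by (intro nn_integral_mono pw)
  also have "\<dots> \<le> 1" unfolding M_eq \<beta>_def by (rule Phi_bound[OF d4]) simp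
  finally have "ennreal (measure_pmf.prob M Fail * exp (\<beta> * d ^ 4)) \<le> 1"
    by (simp add: measure_pmf.emeasure_eq_measure ennreal_mult)
  then have A: "measure_pmf.prob M Fail * exp (\<beta> * d ^ 4) \<le> 1"
    by (simp add: ennreal_le_1)
  have "measure_pmf.prob M Fail \<le> exp (- (\<beta> * d ^ 4))"
    using A by (simp add: exp_minus field_simps)
  also have "\<dots> \<le> exp (- d / 4)"
  proof -
    have h: "X \<noteq> 0 \<Longrightarrow> 1 / X / Y * (X * X) = X / (Y::real)" for X Y
      by (cases "Y = 0") (simp_all add: field_simps)
    have "d ^ 4 = d\<^sup>2 * d\<^sup>2" by (simp add: eval_nat_numeral)
    then have "\<beta> * d ^ 4 = d\<^sup>2 / (2 * (d + 1))" unfolding \<beta>_def using dpos h[of "d\<^sup>2" "2 * (d + 1)"]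
      by simp
    also have "\<dots> \<ge> d / 4"
    proof -
      have "d * (2 * (d + 1)) \<le> 4 * d\<^sup>2" using d4 by (simp add: power2_eq_square algebra_simps)
      then show ?thesis using dpos by (simp add: field_simps)
    qed
    finally show ?thesis by simp
  qed
  finally show ?thesis unfolding M_def Fail_def .
qed


lemma mis_good:
  assumes d4: "d \<ge> 4"
  shows "measure_pmf.prob (map_pmf (mis_removed n E d) (mis_mark_pmf n (1 / d\<^sup>2))) {R. goodd n E d R}
          \<ge> 1 - real n * exp (- d / 4)"
proof -
  define M where "M = mis_mark_pmf n (1 / d\<^sup>2)"
  define F where "F = (\<lambda>v. {mk. v \<notin> mis_removed n E d mk \<and> d ^ 4 < real (card {u \<in> children n E d v. u \<notin> mis_removed n E d mk})})"
  define Bad where "Bad = (\<Union>v\<in>{..<n}. F v)"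
  have sub: "- Bad \<subseteq> mis_removed n E d -` {R. goodd n E d R}"
  proof
    fix mk assume "mk \<in> - Bad"
    then have "mk \<notin> F v" if "v < n" for v using that unfolding Bad_def by auto
    then show "mk \<in> mis_removed n E d -` {R. goodd n E d R}"
      unfolding F_def goodd_def by (auto simp: not_less)
  qed
  have "measure_pmf.prob M Bad \<le> (\<Sum>v\<in>{..<n}. measure_pmf.prob M (F v))"
    unfolding Bad_def by (rule measure_pmf.finite_measure_subadditive_finite) simp_all
  also have "\<dots> \<le> (\<Sum>v\<in>{..<n}. exp (- d / 4))"
    by (rule sum_mono) (use mis_fail_bound[OF d4] in \<open>simp add: M_def F_def\<close>)
  also have "\<dots> = real n * exp (- d / 4)" by simp
  finally have B: "measure_pmf.prob M Bad \<le> real n * exp (- d / 4)" .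
  have "measure_pmf.prob M (- Bad) = 1 - measure_pmf.prob M Bad"
    using measure_pmf.prob_compl[of Bad M] by (simp add: Compl_eq_Diff_UNIV)
  moreover have "measure_pmf.prob M (- Bad) \<le> measure_pmf.prob M (mis_removed n E d -` {R. goodd n E d R})"
    by (rule measure_pmf.finite_measure_mono[OF sub]) simp
  ultimately show ?thesis using B unfolding M_def by simp
qed

end

lemma d_lower:
  fixes K M D :: real
  assumes K: "K > 0" and M: "M > 0" and D: "D \<ge> K * M ^ 20"
  shows "D powr (1/10) \<ge> K powr (1/10) * M ^ 2"
proof -
  have "(K * M ^ 20) powr (1/10) \<le> D powr (1/10)"
    using D K M by (intro powr_mono2) simp_all
  moreover have "(K * M ^ 20) powr (1/10) = K powr (1/10) * (M ^ 20) powr (1/10)"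
    using K M by (simp add: powr_mult)
  moreover have "(M ^ 20) powr (1/10) = M ^ 2"
  proof -
    have "(M ^ 20) powr (1/10) = (M powr 20) powr (1/10)" using M by (simp add: powr_realpow)
    also have "\<dots> = M powr 2" by (simp add: powr_powr)
    also have "\<dots> = M ^ 2" using M by (simp add: powr_realpow)
    finally show ?thesis .
  qed
  ultimately show ?thesis by simp
qed

lemma final_arith:
  fixes n :: nat and c d :: real
  assumes n: "n \<ge> 1" and c: "c \<ge> 1" and dd: "d \<ge> 4 * (c + 1) * ln (real n)"
  shows "real n * exp (- d / 4) \<le> real n powr (- c)"
proof -
  have npos: "real n > 0" using n by simp
  have "- d / 4 \<le> - ((c + 1) * ln (real n))" using dd by (simp add: algebra_simps)
  then have "exp (- d / 4) \<le> exp (- ((c + 1) * ln (real n)))" by simp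
  also have "\<dots> = real n powr (- (c + 1))" using npos by (simp add: powr_def algebra_simps)
  finally have "real n * exp (- d / 4) \<le> real n * real n powr (- (c + 1))"
    using npos by (intro mult_left_mono) simp_all
  also have "\<dots> = real n powr 1 * real n powr (- (c + 1))" using npos by simp
  also have "\<dots> = real n powr (1 + - (c + 1))" by (rule powr_add[symmetric])
  also have "\<dots> = real n powr (- c)" by simp
  finally show ?thesis .
qed


theorem lemma3:
  fixes c K :: real and f :: "nat \<Rightarrow> real"
  assumes "c \<ge> 1" and "K > 0"
    and "\<forall>\<epsilon>>0. f \<in> o(\<lambda>n. real n powr \<epsilon>)"
  shows "\<exists>n0. \<forall>n E. n \<ge> n0 \<and> graph n E
      \<and> real (arboricity E) \<le> f n
      \<and> real (max_degree n E) \<ge> K * (max (real (arboricity E)) (ln (real n))) ^ 20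
      \<longrightarrow> measure_pmf.prob (alg_match n E) {R. good_outcome n E R} \<ge> 1 - real n powr (- c)
        \<and> measure_pmf.prob (alg_mis n E) {R. good_outcome n E R} \<ge> 1 - real n powr (- c)"
proof -
  have c1: "c \<ge> 1" and K0: "K > 0" using assms by auto
  define k where "k = K powr (1/10)"
  have k0: "k > 0" unfolding k_def using K0 by simp
  define A where "A = max (4 * (c + 1) / k) (max (2 / k) 1)"
  define n0 where "n0 = nat \<lceil>exp A\<rceil>"
  show ?thesis
  proof (intro exI[of _ n0] allI impI)
    fix n E
    assume H: "n \<ge> n0 \<and> graph n E \<and> real (arboricity E) \<le> f n
      \<and> real (max_degree n E) \<ge> K * (max (real (arboricity E)) (ln (real n))) ^ 20"
    then have nn0: "n \<ge> n0" and G: "graph n E"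
      and Dl: "real (max_degree n E) \<ge> K * (max (real (arboricity E)) (ln (real n))) ^ 20" by auto
    have "exp A \<le> real n0" unfolding n0_def by linarith
    also have "\<dots> \<le> real n" using nn0 by simp
    finally have nA: "exp A \<le> real n" .
    have npos: "real n > 0" using nA exp_gt_zero[of A] by linarith
    then have n1: "n \<ge> 1" by simp
    have lnA: "A \<le> ln (real n)" using nA npos by (metis exp_le_cancel_iff exp_ln)
    define lam where "lam = real (arboricity E)"
    define M where "M = max lam (ln (real n))"
    define d where "d = dpar n E"
    have A1: "A \<ge> 1" unfolding A_def by simp
    have MA: "M \<ge> A" unfolding M_def using lnA by simp
    have Mpos: "M > 0" using MA A1 by simp
    have dM: "d \<ge> k * M ^ 2" unfolding d_def dpar_def k_def M_def lam_def
      by (rule d_lower[OF K0]) (use Mpos Dl in \<open>simp_all add: M_def lam_def\<close>)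
    have kM1: "k * M \<ge> 4 * (c + 1)"
    proof -
      have "4 * (c + 1) / k \<le> M" using MA unfolding A_def by simp
      then show ?thesis using k0 by (simp add: pos_divide_le_eq mult.commute)
    qed
    have kM2: "k * M \<ge> 2"
    proof -
      have "2 / k \<le> M" using MA unfolding A_def by simp
      then show ?thesis using k0 by (simp add: pos_divide_le_eq mult.commute)
    qed
    have kMM: "k * M ^ 2 = (k * M) * M" by (simp add: power2_eq_square)
    have d_ln: "d \<ge> 4 * (c + 1) * ln (real n)"
    proof -
      have "4 * (c + 1) * ln (real n) \<le> 4 * (c + 1) * M"
        unfolding M_def using c1 by (intro mult_left_mono) simp_all
      also have "\<dots> \<le> (k * M) * M" using kM1 Mpos by (intro mult_right_mono) simp_all
      finally show ?thesis using dM kMM by simp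
    qed
    have d4: "d \<ge> 4"
    proof -
      have "ln (real n) \<ge> 1" using lnA A1 by simp
      then have X: "4 * (c + 1) * ln (real n) \<ge> 4 * (c + 1) * 1" using c1 by (intro mult_left_mono) simp_all
      have "4 \<le> 4 * (c + 1) * 1" using c1 by simp
      also note X
      also note d_ln
      finally show ?thesis .
    qed
    have d_lam: "2 * real (arboricity E) \<le> d"
    proof -
      have "2 * lam \<le> 2 * M" unfolding M_def by simp
      also have "\<dots> \<le> (k * M) * M" using kM2 Mpos by (intro mult_right_mono) simp_all
      finally show ?thesis using dM kMM unfolding lam_def by simp
    qed
    interpret setting n E d by (rule setting_intro[OF G d_lam])
    have bound: "real n * exp (- d / 4) \<le> real n powr (- c)" by (rule final_arith[OF n1 c1 d_ln])
    have m: "measure_pmf.prob (alg_match n E) {R. good_outcome n E R} \<ge> 1 - real n * exp (- (d ^ 3))"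
      using match_good[of] d4 unfolding alg_match_def Let_def good_outcome_goodd d_def by simp
    have "exp (- (d ^ 3)) \<le> exp (- d / 4)"
    proof -
      have "d \<le> d ^ 3"
      proof -
        have "1 \<le> d * d" using d4 mult_mono[of 1 d 1 d] by simp
        then have "d * 1 \<le> d * (d * d)" using d4 by (intro mult_left_mono) simp_all
        then show ?thesis by (simp add: power3_eq_cube)
      qed
      then show ?thesis using d4 by simp
    qed
    then have "real n * exp (- (d ^ 3)) \<le> real n * exp (- d / 4)" by (intro mult_left_mono) simp_all
    then have m': "measure_pmf.prob (alg_match n E) {R. good_outcome n E R} \<ge> 1 - real n powr (- c)"
      using m bound by linarith
    have mi: "measure_pmf.prob (alg_mis n E) {R. good_outcome n E R} \<ge> 1 - real n * exp (- d / 4)"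
      using mis_good d4 unfolding alg_mis_def Let_def good_outcome_goodd d_def by simp
    show "measure_pmf.prob (alg_match n E) {R. good_outcome n E R} \<ge> 1 - real n powr (- c)
        \<and> measure_pmf.prob (alg_mis n E) {R. good_outcome n E R} \<ge> 1 - real n powr (- c)"
      using m' mi bound by linarith
  qed
qed


end
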